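(* Let $d\ge1$, $\lambda>0$, and let $f_0:\mathbb{R}^d\to[0,\infty)$ be a probability density satisfying: (i) $f_0$ is continuous and $\lim_{\|x\|\to\infty}f_0(x)=0$; (ii) there are constants $C,\bar\epsilon>0$ with $\int_{\{x:|f_0(x)-\lambda|\le\epsilon\}}f_0(x)\,dx\le C\epsilon$ for all $\epsilon\in(0,\bar\epsilon)$; (iii) for any $\lambda_l<\lambda_h$ in $[\lambda-\bar\epsilon,\lambda+\bar\epsilon]$ and $x,y\in S_{\lambda_h}$: if $x,y$ lie in different connected components of $S_{\lambda_h}$ then they lie in different connected components of $S_{\lambda_l}$, and if $x,y$ lie in the same connected component of $S_{\lambda_l}$ then they lie in the same connected component of $S_{\lambda_h}$. Suppose further that $f_0$ is $\alpha$-H\"older continuous for some $\alpha\in(0,1]$, that $\mathcal{X}_n=\{x_1,\dots,x_n\}$ are drawn independently from $f_0$ with $n\ge16$, and that $D=\binom n2^{-1}L$ where $L$ is the Inactive/Active Binder loss with constants $0<a\le1$, $0<m\le1$, $a\le 2m$. Then there are finite constants $C_0,\bar\delta,\bar\gamma>0$, depending on $f_0$ (and $\lambda$), such that with probability at least $1-\frac{1+n}{n^2}$, $$\sup_{f:\|f-f_0\|_\infty\le\gamma} D\{\tilde\psi_{\lambda,\delta}(f),\psi_\lambda(f_0)\}\le C_0\Big\{\max(\gamma,\delta^\alpha)+\sqrt{\tfrac{\ln n}{n}}\Big\}$$ holds simultaneously for all $\delta\in[r_{n,\lambda,d},\bar\delta)$ and all $\gamma\in(0,\bar\gamma)$, where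 $r_{n,\lambda,d}=2\big(\frac{16\,d\ln n}{\lambda v_d n}\big)^{1/d}$ and $v_d$ is the volume of the unit Euclidean ball in $\mathbb{R}^d$.
   Context: $S_t=\{x\in\mathbb{R}^d:f_0(x)\ge t\}$ denotes the level-$t$ set of $f_0$; connectivity refers to topological connected components. A sub-partition of $\mathcal{X}_n$ is a collection of non-empty pairwise disjoint subsets of $\mathcal{X}_n$ (union possibly proper); its active set is the union, the rest are inactive points, and its allocation vector $c$ has $c_i=h$ if $x_i\in C_h$, $c_i=0$ if $x_i$ inactive. The level-$\lambda$ clustering $\psi_\lambda(f_0)$ is the sub-partition of $\mathcal{X}_n$ consisting of the non-empty sets $W\cap\mathcal{X}_n$ where $W$ ranges over the connected components of $S_\lambda$. For a function $f:\mathbb{R}^d\to\mathbb{R}$ and $\delta>0$, the surrogate clustering $\tilde\psi_{\lambda,\delta}(f)$ is the sub-partition of $\mathcal{X}_n$ given by the graph-theoretic connected components of the graph with vertex set $A_{f,\lambda}=\{x\in\mathcal{X}_n:f(x)\ge\lambda\}$ and edges $\{(x,y):\|x-y\|<\delta\}$. The Inactive/Active Binder loss between sub-partitions $\mathbf{C},\mathbf{C}'$ with active sets $A,A'$, inactive sets $I,I'$ and allocation vectors $c,c'$ is $L(\mathbf{C},\mathbf{C}')=(n-1)m(|A\cap I'|+|I\cap A'|)+\sum_{i<j,\,x_i,x_j\in A\cap A'}a[\mathbf 1(c_i=c_j,c'_i\ne c'_j)+\mathbf 1(c_i\ne c_j,c'_i=c'_j)]$. *)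

theory Defs
  imports "HOL-Probability.Probability"
begin

text \<open>Sub-partitions are represented on the index set {..<n} of the sample
  X 0, ..., X (n-1): a sub-partition is a set of nonempty, pairwise disjoint
  subsets of {..<n}.\<close>

definition level_set :: "('a \<Rightarrow> real) \<Rightarrow> real \<Rightarrow> 'a set" where
  "level_set f t = {x. f x \<ge> t}"

definition level_clustering ::
  "('a::topological_space \<Rightarrow> real) \<Rightarrow> real \<Rightarrow> (nat \<Rightarrow> 'a) \<Rightarrow> nat \<Rightarrow> nat set set" where
  "level_clustering f0 lam X n =
     {{i. i < n \<and> X i \<in> W} | W. W \<in> components (level_set f0 lam)} - {{}}"

definition surr_edges ::
  "('a::metric_space \<Rightarrow> real) \<Rightarrow> real \<Rightarrow> real \<Rightarrow> (nat \<Rightarrow> 'a) \<Rightarrow> nat \<Rightarrow> (nat \<times> nat) set" where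
  "surr_edges f lam delta X n =
     {(i, j). i < n \<and> j < n \<and> f (X i) \<ge> lam \<and> f (X j) \<ge> lam \<and> dist (X i) (X j) < delta}"

definition surrogate_clustering ::
  "('a::metric_space \<Rightarrow> real) \<Rightarrow> real \<Rightarrow> real \<Rightarrow> (nat \<Rightarrow> 'a) \<Rightarrow> nat \<Rightarrow> nat set set" where
  "surrogate_clustering f lam delta X n =
     {{j. (i, j) \<in> (surr_edges f lam delta X n)\<^sup>*} | i. i < n \<and> f (X i) \<ge> lam}"

definition active :: "nat set set \<Rightarrow> nat set" where
  "active C = \<Union>C"

definition inactive :: "nat \<Rightarrow> nat set set \<Rightarrow> nat set" where
  "inactive n C = {..<n} - active C"

definition same_cluster :: "nat set set \<Rightarrow> nat \<Rightarrow> nat \<Rightarrow> bool" where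
  "same_cluster C i j \<longleftrightarrow> (\<exists>B\<in>C. i \<in> B \<and> j \<in> B)"

definition binder_loss ::
  "real \<Rightarrow> real \<Rightarrow> nat \<Rightarrow> nat set set \<Rightarrow> nat set set \<Rightarrow> real" where
  "binder_loss a m n C C' =
     (real n - 1) * m * real (card (active C \<inter> inactive n C') + card (inactive n C \<inter> active C'))
     + (\<Sum>(i, j) \<in> {(i, j). i < j \<and> i \<in> active C \<inter> active C' \<and> j \<in> active C \<inter> active C'}.
          a * ((if same_cluster C i j \<and> \<not> same_cluster C' i j then 1 else 0)
             + (if \<not> same_cluster C i j \<and> same_cluster C' i j then 1 else 0)))"

definition binder_D ::
  "real \<Rightarrow> real \<Rightarrow> nat \<Rightarrow> nat set set \<Rightarrow> nat set set \<Rightarrow> real" where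
  "binder_D a m n C C' = binder_loss a m n C C' / real (n choose 2)"

text \<open>Probability of the i.i.d. sample of size n from density f0 is the product
  measure; the event holds "with probability at least p" if it contains a
  measurable set of probability at least p.\<close>
definition sample_space :: "('a::euclidean_space \<Rightarrow> real) \<Rightarrow> nat \<Rightarrow> (nat \<Rightarrow> 'a) measure" where
  "sample_space f0 n = PiM {..<n} (\<lambda>_. density lborel (\<lambda>x. ennreal (f0 x)))"

definition holds_with_prob_at_least ::
  "'b measure \<Rightarrow> ('b \<Rightarrow> bool) \<Rightarrow> real \<Rightarrow> bool" where
  "holds_with_prob_at_least M P p \<longleftrightarrow>
     (\<exists>E\<in>sets M. E \<subseteq> {\<omega>\<in>space M. P \<omega>} \<and> measure M E \<ge> p)"

definition holder_continuous :: "real \<Rightarrow> ('a::metric_space \<Rightarrow> real) \<Rightarrow> bool" where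
  "holder_continuous \<alpha> f \<longleftrightarrow> (\<exists>H. \<forall>x y. \<bar>f x - f y\<bar> \<le> H * dist x y powr \<alpha>)"

definition r_rate :: "nat \<Rightarrow> real \<Rightarrow> nat \<Rightarrow> real \<Rightarrow> real" where
  "r_rate n lam d vd = 2 * (16 * real d * ln (real n) / (lam * vd * real n)) powr (1 / real d)"

end

theory Submission
  imports Defs
begin

lemma binder_loss_bound:
  fixes C C' :: "nat set set" and G :: "nat set"
  assumes AC: "active C \<subseteq> {..<n}" and AC': "active C' \<subseteq> {..<n}"
    and act: "\<And>i. i \<in> G \<Longrightarrow> i < n \<Longrightarrow> i \<in> active C \<longleftrightarrow> i \<in> active C'"
    and same: "\<And>i j. i \<in> G \<Longrightarrow> j \<in> G \<Longrightarrow> i \<in> active C \<Longrightarrow> j \<in> active C \<Longrightarrow> i < n \<Longrightarrow> j < n \<Longrightarrow>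
        same_cluster C i j \<longleftrightarrow> same_cluster C' i j"
    and a: "0 \<le> a" "a \<le> 1" and m: "0 \<le> m" "m \<le> 1" and n: "n \<ge> 1"
  shows "binder_loss a m n C C' \<le> 3 * real n * real (card ({..<n} - G))"
proof -
  define B where "B = {..<n} - G"
  have finB: "finite B" by (simp add: B_def)
  have sub1: "active C \<inter> inactive n C' \<union> inactive n C \<inter> active C' \<subseteq> B"
    using AC AC' act by (auto simp: B_def inactive_def)
  have disj: "(active C \<inter> inactive n C') \<inter> (inactive n C \<inter> active C') = {}"
    by (auto simp: inactive_def)
  have "card (active C \<inter> inactive n C') + card (inactive n C \<inter> active C')
        = card (active C \<inter> inactive n C' \<union> inactive n C \<inter> active C')"
    by (rule card_Un_disjoint[symmetric]) (use disj finite_subset[OF sub1 finB] in auto)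
  also have "\<dots> \<le> card B" by (rule card_mono[OF finB sub1])
  finally have c1: "card (active C \<inter> inactive n C') + card (inactive n C \<inter> active C') \<le> card B" .
  have t1: "(real n - 1) * m * real (card (active C \<inter> inactive n C') + card (inactive n C \<inter> active C'))
       \<le> real n * real (card B)"
  proof -
    have "(real n - 1) * m \<le> real n" using m n by (simp add: mult_le_one order_trans[of _ "real n - 1"] mult_left_le)
    moreover have "real (card (active C \<inter> inactive n C') + card (inactive n C \<inter> active C')) \<le> real (card B)"
      using c1 by linarith
    ultimately show ?thesis using m n by (intro mult_mono) auto
  qed
  define Pairs where "Pairs = {(i, j). i < j \<and> i \<in> active C \<inter> active C' \<and> j \<in> active C \<inter> active C'}"
  have PairsSub: "Pairs \<subseteq> {..<n} \<times> {..<n}" using AC AC' by (auto simp: Pairs_def)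
  have finP: "finite Pairs" using finite_subset[OF PairsSub] by auto
  define T where "T = (\<lambda>(i, j). a * ((if same_cluster C i j \<and> \<not> same_cluster C' i j then 1 else 0)
             + (if \<not> same_cluster C i j \<and> same_cluster C' i j then 1 else 0)) :: real)"
  have Tle: "T p \<le> (if fst p \<in> B \<or> snd p \<in> B then 1 else 0)" if "p \<in> Pairs" for p
  proof -
    obtain i j where p: "p = (i, j)" by force
    with that have ij: "i \<in> active C" "j \<in> active C" "i < n" "j < n" using AC by (auto simp: Pairs_def)
    show ?thesis
    proof (cases "i \<in> B \<or> j \<in> B")
      case True thus ?thesis using a by (auto simp: T_def p)
    next
      case False
      hence "i \<in> G" "j \<in> G" using ij by (auto simp: B_def)
      from same[OF this ij] show ?thesis by (auto simp: T_def p)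
    qed
  qed
  have "(\<Sum>p\<in>Pairs. T p) \<le> (\<Sum>p\<in>Pairs. (if fst p \<in> B \<or> snd p \<in> B then 1 else 0))"
    by (rule sum_mono) (use Tle in auto)
  also have "\<dots> = real (card {p\<in>Pairs. fst p \<in> B \<or> snd p \<in> B})"
    by (simp add: sum.If_cases finP Int_def)
  also have "card {p\<in>Pairs. fst p \<in> B \<or> snd p \<in> B} \<le> card (B \<times> {..<n} \<union> {..<n} \<times> B)"
    by (rule card_mono) (use PairsSub finB in auto)
  also have "\<dots> \<le> card (B \<times> {..<n}) + card ({..<n} \<times> B)" by (rule card_Un_le)
  also have "\<dots> = 2 * n * card B" by (simp add: card_cartesian_product)
  finally have t2: "(\<Sum>p\<in>Pairs. T p) \<le> 2 * real n * real (card B)" by simp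
  have "binder_loss a m n C C' = (real n - 1) * m * real (card (active C \<inter> inactive n C') + card (inactive n C \<inter> active C'))
      + (\<Sum>p\<in>Pairs. T p)"
    unfolding binder_loss_def Pairs_def T_def by simp
  also have "\<dots> \<le> 3 * real n * real (card B)" using t1 t2 by linarith
  finally show ?thesis by (simp add: B_def)
qed

lemma surr_edges_sym: "(i, j) \<in> surr_edges f lam delta X n \<Longrightarrow> (j, i) \<in> surr_edges f lam delta X n"
  by (auto simp: surr_edges_def dist_commute)

lemma surr_rtrancl_sym:
  assumes "(i, j) \<in> (surr_edges f lam delta X n)\<^sup>*"
  shows "(j, i) \<in> (surr_edges f lam delta X n)\<^sup>*"
  using assms
proof (induction rule: rtrancl_induct)
  case base thus ?case by simp
next
  case (step y z)
  thus ?case by (meson converse_rtrancl_into_rtrancl surr_edges_sym)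
qed

lemma surr_rtrancl_active:
  assumes "(i, j) \<in> (surr_edges f lam delta X n)\<^sup>*" "i < n" "f (X i) \<ge> lam"
  shows "j < n \<and> f (X j) \<ge> lam"
  using assms
  by (induction rule: rtrancl_induct) (auto simp: surr_edges_def)

lemma active_surr:
  "active (surrogate_clustering f lam delta X n) = {i. i < n \<and> f (X i) \<ge> lam}"
proof
  show "active (surrogate_clustering f lam delta X n) \<subseteq> {i. i < n \<and> f (X i) \<ge> lam}"
  proof
    fix i assume "i \<in> active (surrogate_clustering f lam delta X n)"
    then obtain i0 where "i0 < n" "f (X i0) \<ge> lam" "(i0, i) \<in> (surr_edges f lam delta X n)\<^sup>*"
      unfolding active_def surrogate_clustering_def by auto
    from surr_rtrancl_active[OF this(3,1,2)] show "i \<in> {i. i < n \<and> f (X i) \<ge> lam}" by simp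
  qed
  show "{i. i < n \<and> f (X i) \<ge> lam} \<subseteq> active (surrogate_clustering f lam delta X n)"
    unfolding active_def surrogate_clustering_def apply (intro subsetI)
    subgoal for i by (rule UnionI[of "{j. (i, j) \<in> (surr_edges f lam delta X n)\<^sup>*}"]) auto
    done
qed

lemma same_surr:
  assumes "i < n" "f (X i) \<ge> lam"
  shows "same_cluster (surrogate_clustering f lam delta X n) i j \<longleftrightarrow> (i, j) \<in> (surr_edges f lam delta X n)\<^sup>*"
proof
  assume "same_cluster (surrogate_clustering f lam delta X n) i j"
  then obtain i0 where "(i0, i) \<in> (surr_edges f lam delta X n)\<^sup>*" "(i0, j) \<in> (surr_edges f lam delta X n)\<^sup>*"
    unfolding same_cluster_def surrogate_clustering_def by auto
  thus "(i, j) \<in> (surr_edges f lam delta X n)\<^sup>*"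
    by (meson rtrancl_trans surr_rtrancl_sym)
next
  assume "(i, j) \<in> (surr_edges f lam delta X n)\<^sup>*"
  thus "same_cluster (surrogate_clustering f lam delta X n) i j"
    unfolding same_cluster_def surrogate_clustering_def using assms by (intro bexI[of _ "{k. (i, k) \<in> (surr_edges f lam delta X n)\<^sup>*}"]) auto
qed

lemma active_level:
  "active (level_clustering f0 lam X n) = {i. i < n \<and> X i \<in> level_set f0 lam}"
proof (intro set_eqI iffI)
  fix i assume "i \<in> active (level_clustering f0 lam X n)"
  then obtain W where "W \<in> components (level_set f0 lam)" "i < n" "X i \<in> W"
    unfolding active_def level_clustering_def by auto
  thus "i \<in> {i. i < n \<and> X i \<in> level_set f0 lam}" using in_components_subset by auto
next
  fix i assume i: "i \<in> {i. i < n \<and> X i \<in> level_set f0 lam}"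
  let ?W = "connected_component_set (level_set f0 lam) (X i)"
  have "?W \<in> components (level_set f0 lam)" using i by (simp add: componentsI)
  moreover have "X i \<in> ?W" using i by (simp add: connected_component_refl)
  ultimately show "i \<in> active (level_clustering f0 lam X n)" unfolding active_def level_clustering_def using i
    by (intro UnionI[of "{k. k < n \<and> X k \<in> ?W}"]) auto
qed

lemma same_level:
  assumes "X i \<in> level_set f0 lam" "i < n"
  shows "same_cluster (level_clustering f0 lam X n) i j \<longleftrightarrow> j < n \<and> connected_component (level_set f0 lam) (X i) (X j)"
proof
  assume "same_cluster (level_clustering f0 lam X n) i j"
  then obtain W where W: "W \<in> components (level_set f0 lam)" "X i \<in> W" "X j \<in> W" "j < n"
    unfolding same_cluster_def level_clustering_def by auto
  then obtain x where "W = connected_component_set (level_set f0 lam) x" by (auto simp: components_def)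
  with W have "connected_component (level_set f0 lam) x (X i)" "connected_component (level_set f0 lam) x (X j)"
    by auto
  with W show "j < n \<and> connected_component (level_set f0 lam) (X i) (X j)"
    using connected_component_sym connected_component_trans by metis
next
  assume a: "j < n \<and> connected_component (level_set f0 lam) (X i) (X j)"
  define W where "W = connected_component_set (level_set f0 lam) (X i)"
  have "W \<in> components (level_set f0 lam)" using assms by (simp add: W_def componentsI)
  moreover have "X i \<in> W" "X j \<in> W" using assms a by (auto simp: W_def connected_component_refl)
  ultimately show "same_cluster (level_clustering f0 lam X n) i j"
    unfolding same_cluster_def level_clustering_def using assms a by (intro bexI[of _ "{k. k < n \<and> X k \<in> W}"]) auto
qed

lemma holder_bound:
  fixes f0 :: "'a::metric_space \<Rightarrow> real"
  assumes hold: "\<And>x y. \<bar>f0 x - f0 y\<bar> \<le> H * dist x y powr \<alpha>" and H: "H \<ge> 0" and al: "\<alpha> > 0"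
    and d: "dist x y \<le> r"
  shows "f0 y \<ge> f0 x - H * r powr \<alpha>"
proof -
  have "dist x y powr \<alpha> \<le> r powr \<alpha>" using d al by (intro powr_mono2) auto
  hence "H * dist x y powr \<alpha> \<le> H * r powr \<alpha>" using H by (rule mult_left_mono)
  with hold[of x y] show ?thesis by linarith
qed

lemma surr_to_low:
  fixes f0 f :: "'a::euclidean_space \<Rightarrow> real"
  assumes hold: "\<And>x y. \<bar>f0 x - f0 y\<bar> \<le> H * dist x y powr \<alpha>" and H: "H \<ge> 0" and al: "\<alpha> > 0"
    and fg: "\<And>x. \<bar>f x - f0 x\<bar> \<le> \<gamma>" and small: "\<gamma> + H * \<delta> powr \<alpha> \<le> eb"
    and path: "(i, j) \<in> (surr_edges f lam \<delta> X n)\<^sup>*" and i: "i < n" "f (X i) \<ge> lam"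
  shows "connected_component (level_set f0 (lam - eb)) (X i) (X j)"
  using path
proof (induction rule: rtrancl_induct)
  case base
  have "\<delta> powr \<alpha> \<ge> 0" by simp
  hence "f0 (X i) \<ge> lam - eb" using fg[of "X i"] i small H
    by (smt (verit) mult_nonneg_nonneg)
  thus ?case by (simp add: level_set_def)
next
  case (step k l)
  from step.hyps(2) have kl: "f (X k) \<ge> lam" "f (X l) \<ge> lam" "dist (X k) (X l) < \<delta>"
    by (auto simp: surr_edges_def)
  have "closed_segment (X k) (X l) \<subseteq> level_set f0 (lam - eb)"
  proof
    fix z assume z: "z \<in> closed_segment (X k) (X l)"
    hence "dist z (X k) \<le> dist (X k) (X l)" by (simp add: dist_in_closed_segment)
    hence "dist (X k) z \<le> \<delta>" using kl by (simp add: dist_commute)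
    from holder_bound[OF hold H al this] have "f0 z \<ge> f0 (X k) - H * \<delta> powr \<alpha>" .
    moreover have "f0 (X k) \<ge> lam - \<gamma>" using fg[of "X k"] kl by linarith
    ultimately show "z \<in> level_set f0 (lam - eb)" using small by (simp add: level_set_def)
  qed
  hence "connected_component (level_set f0 (lam - eb)) (X k) (X l)"
    unfolding connected_component_def
    by (intro exI[of _ "closed_segment (X k) (X l)"]) auto
  with step.IH show ?case using connected_component_trans by blast
qed

lemma surr_to_level:
  fixes f0 f :: "'a::euclidean_space \<Rightarrow> real"
  assumes hold: "\<And>x y. \<bar>f0 x - f0 y\<bar> \<le> H * dist x y powr \<alpha>" and H: "H \<ge> 0" and al: "\<alpha> > 0"
    and fg: "\<And>x. \<bar>f x - f0 x\<bar> \<le> \<gamma>" and small: "\<gamma> + H * \<delta> powr \<alpha> \<le> eb"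
    and iii: "\<forall>x\<in>level_set f0 lam. \<forall>y\<in>level_set f0 lam.
        connected_component (level_set f0 (lam - eb)) x y \<longrightarrow> connected_component (level_set f0 lam) x y"
    and path: "(i, j) \<in> (surr_edges f lam \<delta> X n)\<^sup>*" and i: "i < n" "f (X i) \<ge> lam"
    and ij: "f0 (X i) \<ge> lam" "f0 (X j) \<ge> lam"
  shows "connected_component (level_set f0 lam) (X i) (X j)"
  using iii surr_to_low[OF hold H al fg small path i] ij by (auto simp: level_set_def)

lemma level_to_surr:
  fixes f0 f :: "'a::euclidean_space \<Rightarrow> real"
  assumes hold: "\<And>x y. \<bar>f0 x - f0 y\<bar> \<le> H * dist x y powr \<alpha>" and H: "H \<ge> 0" and al: "\<alpha> > 0"
    and fg: "\<And>x. \<bar>f x - f0 x\<bar> \<le> \<gamma>" and g: "\<gamma> \<ge> 0"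
    and kap: "\<kappa> = \<gamma> + H * \<delta> powr \<alpha>"
    and rho: "0 < \<rho>" "2 * \<rho> < \<delta>"
    and cov: "\<forall>q\<in>level_set f0 lam. \<exists>k<n. dist q (X k) < \<rho>"
    and iii: "\<forall>x\<in>level_set f0 (lam + \<kappa>). \<forall>y\<in>level_set f0 (lam + \<kappa>).
        connected_component (level_set f0 lam) x y \<longrightarrow> connected_component (level_set f0 (lam + \<kappa>)) x y"
    and ij: "i < n" "j < n" "f0 (X i) \<ge> lam + \<kappa>" "f0 (X j) \<ge> lam + \<kappa>"
    and cc: "connected_component (level_set f0 lam) (X i) (X j)"
  shows "(i, j) \<in> (surr_edges f lam \<delta> X n)\<^sup>*"
proof -
  let ?E = "surr_edges f lam \<delta> X n"
  have kap0: "\<kappa> \<ge> \<gamma>" using kap H by simp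
  have ccH: "connected_component (level_set f0 (lam + \<kappa>)) (X i) (X j)"
    using iii ij cc by (auto simp: level_set_def)
  define Q where "Q = connected_component_set (level_set f0 (lam + \<kappa>)) (X i)"
  have Qc: "connected Q" by (simp add: Q_def)
  have XiQ: "X i \<in> Q" using ij by (simp add: Q_def connected_component_refl level_set_def)
  have XjQ: "X j \<in> Q" using ccH by (simp add: Q_def)
  have Qsub: "\<And>q. q \<in> Q \<Longrightarrow> f0 q \<ge> lam + \<kappa>"
    using connected_component_subset[of "level_set f0 (lam + \<kappa>)" "X i"] by (auto simp: Q_def level_set_def)
  have actk: "f (X k) \<ge> lam" if "q \<in> Q" "dist q (X k) < \<rho>" for q k
  proof -
    have "dist q (X k) \<le> \<delta>" using that rho by linarith
    from holder_bound[OF hold H al this] have "f0 (X k) \<ge> f0 q - H * \<delta> powr \<alpha>" .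
    with Qsub[OF that(1)] fg[of "X k"] kap show ?thesis by linarith
  qed
  have covQ: "\<exists>k<n. dist q (X k) < \<rho>" if "q \<in> Q" for q
  proof -
    have "f0 q \<ge> lam" using Qsub[OF that] kap0 g by linarith
    thus ?thesis using cov by (auto simp: level_set_def)
  qed
  define P where "P = (\<lambda>q. \<exists>k<n. dist q (X k) < \<rho> \<and> (i, k) \<in> ?E\<^sup>*)"
  have Pi: "P (X i)" unfolding P_def using ij rho by auto
  have "P (X j)"
  proof (rule connected_induction_simple[where P=P, OF Qc XiQ XjQ Pi])
    fix a assume a: "a \<in> Q"
    let ?T = "Q \<inter> ball a ((\<delta> - 2 * \<rho>) / 2)"
    have "openin (top_of_set Q) ?T" by (simp add: openin_open_Int)
    moreover have "a \<in> ?T" using a rho by simp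
    moreover have "\<forall>x\<in>?T. \<forall>y\<in>?T. P x \<longrightarrow> P y"
    proof (intro ballI impI)
      fix x y assume x: "x \<in> ?T" and y: "y \<in> ?T" and Px: "P x"
      then obtain k where k: "k < n" "dist x (X k) < \<rho>" "(i, k) \<in> ?E\<^sup>*" by (auto simp: P_def)
      obtain k' where k': "k' < n" "dist y (X k') < \<rho>" using covQ y by auto
      have dxy: "dist x y < \<delta> - 2 * \<rho>"
        using x y dist_triangle_half_l[of x a "\<delta> - 2 * \<rho>" y] by (auto simp: dist_commute)
      have "dist (X k) (X k') \<le> dist (X k) x + dist x y + dist y (X k')"
        using dist_triangle[of "X k" "X k'" x] dist_triangle[of x "X k'" y] by linarith
      also have "\<dots> < \<delta>" using k k' dxy by (simp add: dist_commute)
      finally have "dist (X k) (X k') < \<delta>" .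
      moreover have "f (X k) \<ge> lam" "f (X k') \<ge> lam" using actk x y k k' by auto
      ultimately have "(k, k') \<in> ?E" using k k' by (simp add: surr_edges_def)
      with k have "(i, k') \<in> ?E\<^sup>*" by simp
      with k' show "P y" by (auto simp: P_def)
    qed
    ultimately show "\<exists>T. openin (top_of_set Q) T \<and> a \<in> T \<and> (\<forall>x\<in>T. \<forall>y\<in>T. P x \<longrightarrow> P y)" by blast
  qed
  then obtain k where k: "k < n" "dist (X j) (X k) < \<rho>" "(i, k) \<in> ?E\<^sup>*" by (auto simp: P_def)
  have "f (X k) \<ge> lam" using actk[OF XjQ k(2)] .
  moreover have "f (X j) \<ge> lam" using ij fg[of "X j"] kap0 by linarith
  moreover have "dist (X k) (X j) < \<delta>" using k rho by (simp add: dist_commute)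
  ultimately have "(k, j) \<in> ?E" using k ij by (simp add: surr_edges_def)
  with k show ?thesis by simp
qed

lemma binder_D_from_loss:
  assumes "binder_loss a m n C C' \<le> 3 * real n * real k" "n \<ge> 2"
  shows "binder_D a m n C C' \<le> 6 * real k / (real n - 1)"
proof -
  have ev: "even (n * (n - 1))" by (cases "even n") auto
  have "(n choose 2) * 2 = n * (n - 1)" using ev by (simp add: choose_two)
  hence "real (n choose 2) * 2 = real n * (real n - 1)" using assms(2)
    by (metis of_nat_1 of_nat_diff of_nat_mult of_nat_numeral le_trans one_le_numeral)
  hence ch: "real (n choose 2) = real n * (real n - 1) / 2" by simp
  have pos: "real (n choose 2) > 0" using assms(2) by (simp add: ch)
  have "binder_D a m n C C' \<le> 3 * real n * real k / real (n choose 2)"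
    unfolding binder_D_def using pos assms(1) by (simp add: divide_right_mono)
  also have "\<dots> = 6 * real k / (real n - 1)"
    using assms(2) by (simp add: ch field_simps)
  finally show ?thesis .
qed

lemma D_trivial:
  assumes "0 \<le> a" "a \<le> 1" "0 \<le> m" "m \<le> 1" "n \<ge> 16"
  shows "binder_D a m n (surrogate_clustering f lam \<delta> X n) (level_clustering f0 lam X n) \<le> 7"
proof -
  have "binder_loss a m n (surrogate_clustering f lam \<delta> X n) (level_clustering f0 lam X n)
       \<le> 3 * real n * real (card ({..<n} - {}))"
    by (rule binder_loss_bound) (use assms in \<open>auto simp: active_surr active_level\<close>)
  hence "binder_D a m n (surrogate_clustering f lam \<delta> X n) (level_clustering f0 lam X n) \<le> 6 * real n / (real n - 1)"
    using binder_D_from_loss[of a m n _ _ n] assms by simp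
  also have "\<dots> \<le> 7" using assms by (simp add: field_simps)
  finally show ?thesis .
qed

lemma D_bound_det:
  fixes f0 f :: "'a::euclidean_space \<Rightarrow> real"
  assumes hold: "\<And>x y. \<bar>f0 x - f0 y\<bar> \<le> H * dist x y powr \<alpha>" and H: "H \<ge> 0" and al: "\<alpha> > 0"
    and fg: "\<And>x. \<bar>f x - f0 x\<bar> \<le> \<gamma>" and g: "\<gamma> > 0"
    and kap: "\<kappa> = \<gamma> + H * \<delta> powr \<alpha>" and kapeb: "\<kappa> \<le> eb"
    and rho: "0 < \<rho>" "2 * \<rho> < \<delta>"
    and cov: "\<forall>q\<in>level_set f0 lam. \<exists>k<n. dist q (X k) < \<rho>"
    and iii: "\<forall>lam_l lam_h. lam - eb \<le> lam_l \<and> lam_l < lam_h \<and> lam_h \<le> lam + eb \<longrightarrow>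
           (\<forall>x\<in>level_set f0 lam_h. \<forall>y\<in>level_set f0 lam_h.
              (\<not> connected_component (level_set f0 lam_h) x y
                 \<longrightarrow> \<not> connected_component (level_set f0 lam_l) x y) \<and>
              (connected_component (level_set f0 lam_l) x y
                 \<longrightarrow> connected_component (level_set f0 lam_h) x y))"
    and am: "0 \<le> a" "a \<le> 1" "0 \<le> m" "m \<le> 1" and n: "n \<ge> 2"
  shows "binder_D a m n (surrogate_clustering f lam \<delta> X n) (level_clustering f0 lam X n)
     \<le> 6 * real (card {i. i < n \<and> \<bar>f0 (X i) - lam\<bar> \<le> \<kappa>}) / (real n - 1)"
proof -
  have kap0: "\<kappa> \<ge> \<gamma>" using kap H by simp
  have eb: "eb > 0" using kap0 g kapeb by linarith
  have iiiL: "\<forall>x\<in>level_set f0 lam. \<forall>y\<in>level_set f0 lam.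
        connected_component (level_set f0 (lam - eb)) x y \<longrightarrow> connected_component (level_set f0 lam) x y"
  proof (intro ballI impI)
    fix x y assume x: "x \<in> level_set f0 lam" "y \<in> level_set f0 lam" "connected_component (level_set f0 (lam - eb)) x y"
    have cL: "lam - eb \<le> lam - eb \<and> lam - eb < lam \<and> lam \<le> lam + eb" using eb by simp
    note A = mp[OF spec[OF spec[OF iii, of "lam - eb"], of lam] cL]
    show "connected_component (level_set f0 lam) x y" using A x by blast
  qed
  have iiiH: "\<forall>x\<in>level_set f0 (lam + \<kappa>). \<forall>y\<in>level_set f0 (lam + \<kappa>).
        connected_component (level_set f0 lam) x y \<longrightarrow> connected_component (level_set f0 (lam + \<kappa>)) x y"
  proof (intro ballI impI)
    fix x y assume x: "x \<in> level_set f0 (lam + \<kappa>)" "y \<in> level_set f0 (lam + \<kappa>)" "connected_component (level_set f0 lam) x y"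
    have cL: "lam - eb \<le> lam \<and> lam < lam + \<kappa> \<and> lam + \<kappa> \<le> lam + eb" using eb kap0 g kapeb by simp
    note A = mp[OF spec[OF spec[OF iii, of lam], of "lam + \<kappa>"] cL]
    show "connected_component (level_set f0 (lam + \<kappa>)) x y" using A x by blast
  qed
  have small: "\<gamma> + H * \<delta> powr \<alpha> \<le> eb" using kap kapeb by simp
  define G where "G = {i. i < n \<and> \<bar>f0 (X i) - lam\<bar> > \<kappa>}"
  have B: "{..<n} - G = {i. i < n \<and> \<bar>f0 (X i) - lam\<bar> \<le> \<kappa>}" by (auto simp: G_def)
  have "binder_loss a m n (surrogate_clustering f lam \<delta> X n) (level_clustering f0 lam X n)
       \<le> 3 * real n * real (card ({..<n} - G))"
  proof (rule binder_loss_bound)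
    show "active (surrogate_clustering f lam \<delta> X n) \<subseteq> {..<n}" by (auto simp: active_surr)
    show "active (level_clustering f0 lam X n) \<subseteq> {..<n}" by (auto simp: active_level)
    show "i \<in> active (surrogate_clustering f lam \<delta> X n) \<longleftrightarrow> i \<in> active (level_clustering f0 lam X n)"
      if "i \<in> G" "i < n" for i
    proof (cases "f0 (X i) > lam + \<kappa>")
      case True
      hence "f (X i) \<ge> lam" using fg[of "X i"] kap0 by linarith
      thus ?thesis using True that kap0 g by (auto simp: active_surr active_level level_set_def)
    next
      case False
      hence "f0 (X i) < lam - \<kappa>" using that by (auto simp: G_def)
      hence "f (X i) < lam" "f0 (X i) < lam" using fg[of "X i"] kap0 g by linarith+
      thus ?thesis by (auto simp: active_surr active_level level_set_def)
    qed
    show "same_cluster (surrogate_clustering f lam \<delta> X n) i j \<longleftrightarrow> same_cluster (level_clustering f0 lam X n) i j"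
      if ij: "i \<in> G" "j \<in> G" "i \<in> active (surrogate_clustering f lam \<delta> X n)"
        "j \<in> active (surrogate_clustering f lam \<delta> X n)" "i < n" "j < n" for i j
    proof -
      have fi: "f (X i) \<ge> lam" "f (X j) \<ge> lam" using ij by (auto simp: active_surr)
      have hi: "f0 (X i) \<ge> lam + \<kappa>" "f0 (X j) \<ge> lam + \<kappa>"
      proof -
        have "\<not> f0 (X i) < lam - \<kappa>" using fi fg[of "X i"] kap0 by linarith
        thus "f0 (X i) \<ge> lam + \<kappa>" using ij by (auto simp: G_def)
        have "\<not> f0 (X j) < lam - \<kappa>" using fi fg[of "X j"] kap0 by linarith
        thus "f0 (X j) \<ge> lam + \<kappa>" using ij by (auto simp: G_def)
      qed
      have l0: "f0 (X i) \<ge> lam" "f0 (X j) \<ge> lam" using hi kap0 g by linarith+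
      have g0: "\<gamma> \<ge> 0" using g by simp
      have d2: "connected_component (level_set f0 lam) (X i) (X j) \<Longrightarrow> (i, j) \<in> (surr_edges f lam \<delta> X n)\<^sup>*"
        by (rule level_to_surr[OF hold H al fg g0 kap rho cov iiiH ij(5,6) hi])
      have d1: "(i, j) \<in> (surr_edges f lam \<delta> X n)\<^sup>* \<Longrightarrow> connected_component (level_set f0 lam) (X i) (X j)"
        by (rule surr_to_level[OF hold H al fg small iiiL _ ij(5) fi(1) l0])
      have "same_cluster (surrogate_clustering f lam \<delta> X n) i j \<longleftrightarrow> (i, j) \<in> (surr_edges f lam \<delta> X n)\<^sup>*"
        using same_surr[of i n lam f X \<delta> j] ij(5) fi(1) by simp
      also have "\<dots> \<longleftrightarrow> connected_component (level_set f0 lam) (X i) (X j)"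
        using d1 d2 by blast
      also have "\<dots> \<longleftrightarrow> same_cluster (level_clustering f0 lam X n) i j"
        using same_level[of X i f0 lam n j] l0 ij by (simp add: level_set_def)
      finally show ?thesis .
    qed
  qed (use am n in auto)
  thus ?thesis using binder_D_from_loss[OF _ n] B by simp
qed

lemma int_ind:
  fixes f0 :: "'a \<Rightarrow> real"
  assumes "A \<in> sets M" "integrable M f0"
  shows "integrable M (\<lambda>x. indicator A x * f0 x)"
  using integrable_mult_indicator[OF assms] by simp

lemma dens_prob:
  fixes f0 :: "'a::euclidean_space \<Rightarrow> real"
  assumes nonneg: "\<And>x. f0 x \<ge> 0" and int: "integrable lborel f0" and dens: "integral\<^sup>L lborel f0 = 1"
  shows "prob_space (density lborel (\<lambda>x. ennreal (f0 x)))"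
proof (rule prob_spaceI)
  have [measurable]: "f0 \<in> borel_measurable lborel" using int by (rule borel_measurable_integrable)
  have "emeasure (density lborel (\<lambda>x. ennreal (f0 x))) (space (density lborel (\<lambda>x. ennreal (f0 x))))
      = (\<integral>\<^sup>+ x. ennreal (f0 x) * indicator UNIV x \<partial>lborel)"
    by (subst emeasure_density) auto
  also have "\<dots> = (\<integral>\<^sup>+ x. ennreal (f0 x) \<partial>lborel)" by simp
  also have "\<dots> = ennreal (integral\<^sup>L lborel f0)"
    by (rule nn_integral_eq_integral[OF int]) (simp add: nonneg)
  finally show "emeasure (density lborel (\<lambda>x. ennreal (f0 x))) (space (density lborel (\<lambda>x. ennreal (f0 x)))) = 1"
    using dens by simp
qed

lemma dens_measure:
  fixes f0 :: "'a::euclidean_space \<Rightarrow> real"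
  assumes nonneg: "\<And>x. f0 x \<ge> 0" and int: "integrable lborel f0" and Ab: "A \<in> sets (borel :: 'a measure)"
  shows "measure (density lborel (\<lambda>x. ennreal (f0 x))) A = (LINT x:A|lborel. f0 x)"
proof -
  have [measurable]: "f0 \<in> borel_measurable lborel" using int by (rule borel_measurable_integrable)
  have Am[measurable]: "A \<in> sets lborel" using Ab by simp
  have "emeasure (density lborel (\<lambda>x. ennreal (f0 x))) A = (\<integral>\<^sup>+ x. ennreal (f0 x) * indicator A x \<partial>lborel)"
    by (subst emeasure_density) (auto simp: Ab)
  also have "\<dots> = (\<integral>\<^sup>+ x. ennreal (indicator A x * f0 x) \<partial>lborel)"
    by (intro nn_integral_cong) (auto simp: indicator_def)
  also have "\<dots> = ennreal (integral\<^sup>L lborel (\<lambda>x. indicator A x * f0 x))"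
    by (rule nn_integral_eq_integral) (auto intro!: int_ind int simp: nonneg Ab)
  finally have "emeasure (density lborel (\<lambda>x. ennreal (f0 x))) A = ennreal (LINT x:A|lborel. f0 x)"
    by (simp add: set_lebesgue_integral_def)
  moreover have "(LINT x:A|lborel. f0 x) \<ge> 0"
    unfolding set_lebesgue_integral_def by (rule Bochner_Integration.integral_nonneg) (auto simp: nonneg indicator_def)
  ultimately show ?thesis by (simp add: measure_def)
qed

lemma dens_measure_ball_ge:
  fixes f0 :: "'a::euclidean_space \<Rightarrow> real"
  assumes nonneg: "\<And>x. f0 x \<ge> 0" and int: "integrable lborel f0"
    and c: "c \<ge> 0" and lb: "\<And>x. x \<in> ball p r \<Longrightarrow> f0 x \<ge> c" and r: "r \<ge> 0"
  shows "measure (density lborel (\<lambda>x. ennreal (f0 x))) (ball p r) \<ge> c * (unit_ball_vol (DIM('a)) * r ^ DIM('a))"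
proof -
  have [measurable]: "f0 \<in> borel_measurable lborel" using int by (rule borel_measurable_integrable)
  have mb: "measure lborel (ball p r) = unit_ball_vol (DIM('a)) * r ^ DIM('a)"
  proof -
    have "unit_ball_vol (real DIM('a)) * r ^ DIM('a) \<ge> 0" using r by simp
    thus ?thesis using emeasure_ball[OF r, of p] by (simp add: measure_def)
  qed
  have "c * measure lborel (ball p r) = integral\<^sup>L lborel (\<lambda>x. indicator (ball p r) x * c)"
    by (simp add: mult.commute)
  also have "\<dots> \<le> integral\<^sup>L lborel (\<lambda>x. indicator (ball p r) x * f0 x)"
  proof (rule integral_mono)
    show "integrable lborel (\<lambda>x. indicator (ball p r) x * c)"
      using emeasure_lborel_ball_finite[of p r]
      by (intro integrable_mult_left) (auto simp add: integrable_indicator_iff)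
    show "integrable lborel (\<lambda>x. indicator (ball p r) x * f0 x)"
      by (intro int_ind int) auto
  qed (auto simp: indicator_def lb)
  also have "\<dots> = measure (density lborel (\<lambda>x. ennreal (f0 x))) (ball p r)"
    by (subst dens_measure[OF nonneg int]) (auto simp: set_lebesgue_integral_def)
  finally show ?thesis using mb by simp
qed

lemma space_sample:
  "space (PiM {..<n} (\<lambda>_. density lborel (\<lambda>x. ennreal ((f0::'a::euclidean_space \<Rightarrow> real) x)))) = PiE {..<n} (\<lambda>_. UNIV)"
  by (simp add: space_PiM)

lemma cov_fail_measure:
  fixes f0 :: "'a::euclidean_space \<Rightarrow> real"
  assumes P: "prob_space (density lborel (\<lambda>x. ennreal (f0 x)))" and B: "B \<in> sets (borel :: 'a measure)"
  shows "measure (PiM {..<n} (\<lambda>_. density lborel (\<lambda>x. ennreal (f0 x))))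
           {\<omega> \<in> space (PiM {..<n} (\<lambda>_. density lborel (\<lambda>x. ennreal (f0 x)))). \<forall>k<n. \<omega> k \<notin> B}
         = (1 - measure (density lborel (\<lambda>x. ennreal (f0 x))) B) ^ n"
proof -
  define Q where "Q = density lborel (\<lambda>x. ennreal (f0 x))"
  interpret Q: prob_space Q using P by (simp add: Q_def)
  interpret PP: product_prob_space "\<lambda>_. Q" by (rule product_prob_spaceI) (rule Q.prob_space_axioms)
  have sQ: "space Q = UNIV" by (simp add: Q_def)
  have BQ: "B \<in> sets Q" using B by (simp add: Q_def)
  have eq: "{\<omega> \<in> space (PiM {..<n} (\<lambda>_. Q)). \<forall>k<n. \<omega> k \<notin> B} = PiE {..<n} (\<lambda>_. space Q - B)"
    by (auto simp: space_PiM sQ PiE_def Pi_def)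
  have "emeasure (PiM {..<n} (\<lambda>_. Q)) (PiE {..<n} (\<lambda>_. space Q - B)) = (\<Prod>i\<in>{..<n}. emeasure Q (space Q - B))"
    by (rule PP.emeasure_PiM) (use BQ in auto)
  also have "\<dots> = ennreal ((1 - measure Q B) ^ n)"
    using Q.prob_compl[OF BQ] by (simp add: Q.emeasure_eq_measure prod_ennreal Q.prob_le_1 flip: ennreal_power)
  finally have "emeasure (PiM {..<n} (\<lambda>_. Q)) {\<omega> \<in> space (PiM {..<n} (\<lambda>_. Q)). \<forall>k<n. \<omega> k \<notin> B} = ennreal ((1 - measure Q B) ^ n)"
    using eq by simp
  moreover have "(1 - measure Q B) ^ n \<ge> 0" using Q.prob_le_1 by simp
  ultimately show ?thesis by (simp add: measure_def Q_def)
qed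

lemma indep_coords:
  fixes Q :: "'a measure"
  assumes Q: "prob_space Q" and I: "finite I" "I \<noteq> {}"
  shows "prob_space.indep_vars (PiM I (\<lambda>_. Q)) (\<lambda>_. Q) (\<lambda>i \<omega>. \<omega> i) I"
proof -
  interpret M: prob_space "PiM I (\<lambda>_. Q)" by (rule prob_space_PiM) (rule Q)
  show ?thesis
  proof (subst M.indep_vars_iff_distr_eq_PiM')
    show "I \<noteq> {}" by (rule I)
    have mc: "(\<lambda>\<omega>. \<omega> i) \<in> measurable (PiM I (\<lambda>_. Q)) Q" if "i \<in> I" for i
      using measurable_component_singleton[of i I "\<lambda>_. Q"] that by simp
    show "\<And>i. i \<in> I \<Longrightarrow> (\<lambda>\<omega>. \<omega> i) \<in> measurable (PiM I (\<lambda>_. Q)) Q" by (rule mc)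
    have "distr (PiM I (\<lambda>_. Q)) (PiM I (\<lambda>_. Q)) (\<lambda>x. \<lambda>i\<in>I. x i) = distr (PiM I (\<lambda>_. Q)) (PiM I (\<lambda>_. Q)) (\<lambda>x. x)"
      by (rule distr_cong) (auto simp: space_PiM PiE_def extensional_def restrict_def)
    also have "\<dots> = PiM I (\<lambda>_. Q)" by simp
    also have "\<dots> = PiM I (\<lambda>i. distr (PiM I (\<lambda>_. Q)) Q (\<lambda>x. x i))"
      using distr_PiM_component[of I "\<lambda>_. Q"] Q by (intro PiM_cong) auto
    finally show "distr (PiM I (\<lambda>_. Q)) (PiM I (\<lambda>_. Q)) (\<lambda>x. \<lambda>i\<in>I. x i) = PiM I (\<lambda>i. distr (PiM I (\<lambda>_. Q)) Q (\<lambda>x. x i))" .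
  qed
qed

lemma hoeffding_count:
  fixes Q :: "'a measure"
  assumes Q: "prob_space Q" and A: "A \<in> sets Q" and n: "n > 0" and t: "t \<ge> 0"
  shows "measure (PiM {..<n} (\<lambda>_. Q))
           {\<omega> \<in> space (PiM {..<n} (\<lambda>_. Q)). (\<Sum>i<n. indicator A (\<omega> i)) \<ge> real n * measure Q A + real n * t}
         \<le> exp (- 2 * real n * t\<^sup>2)"
proof -
  interpret Q: prob_space Q by (rule Q)
  interpret M: prob_space "PiM {..<n} (\<lambda>_. Q)" by (rule prob_space_PiM) (rule Q)
  have ind: "M.indep_vars (\<lambda>_. Q) (\<lambda>i \<omega>. \<omega> i) {..<n}" using indep_coords[OF Q, of "{..<n}"] n by auto
  have ind2: "M.indep_vars (\<lambda>_. borel) (\<lambda>i \<omega>. indicator A (\<omega> i) :: real) {..<n}"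
    by (rule M.indep_vars_compose2[OF ind]) (simp add: borel_measurable_indicator A)
  have exp_i: "M.expectation (\<lambda>\<omega>. indicator A (\<omega> i) :: real) = measure Q A" if "i < n" for i
  proof -
    have "M.expectation (\<lambda>\<omega>. indicator A (\<omega> i) :: real) = integral\<^sup>L (distr (PiM {..<n} (\<lambda>_. Q)) Q (\<lambda>\<omega>. \<omega> i)) (indicator A)"
      by (rule integral_distr[symmetric]) (use measurable_component_singleton[of i "{..<n}" "\<lambda>_. Q"] that A in \<open>auto simp: borel_measurable_indicator\<close>)
    also have "distr (PiM {..<n} (\<lambda>_. Q)) Q (\<lambda>\<omega>. \<omega> i) = Q"
      by (rule distr_PiM_component) (use Q that in auto)
    finally show ?thesis using A by (simp add: Int_absorb2 sets.sets_into_space)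
  qed
  interpret H: Hoeffding_ineq "PiM {..<n} (\<lambda>_. Q)" "{..<n}" "\<lambda>i \<omega>. indicator A (\<omega> i)" "\<lambda>_. 0" "\<lambda>_. 1"
      "\<Sum>i<n. M.expectation (\<lambda>\<omega>. indicator A (\<omega> i) :: real)"
  proof unfold_locales
    show "finite {..<n}" by simp
    show "M.indep_vars (\<lambda>_. borel) (\<lambda>i \<omega>. indicator A (\<omega> i) :: real) {..<n}" by (rule ind2)
    show "AE x in PiM {..<n} (\<lambda>_. Q). indicator A (x i) \<in> {0..1::real}" if "i \<in> {..<n}" for i
      by (intro AE_I2) (simp add: indicator_def)
  qed
  have mu: "(\<Sum>i<n. M.expectation (\<lambda>\<omega>. indicator A (\<omega> i) :: real)) = real n * measure Q A"
    using exp_i by simp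
  have "M.prob {\<omega> \<in> space (PiM {..<n} (\<lambda>_. Q)). (\<Sum>i<n. indicator A (\<omega> i)) \<ge> (\<Sum>i<n. M.expectation (\<lambda>\<omega>. indicator A (\<omega> i) :: real)) + real n * t}
      \<le> exp (- 2 * (real n * t)\<^sup>2 / (\<Sum>i<n. (1 - 0)\<^sup>2))"
    by (rule H.Hoeffding_ineq_ge) (use n t in auto)
  also have "\<dots> = exp (- 2 * real n * t\<^sup>2)" using n by (simp add: power2_eq_square)
  finally show ?thesis unfolding mu .
qed

lemma packing_card:
  fixes N :: "'a::euclidean_space set"
  assumes fin: "finite N" and sep: "\<And>p q. p \<in> N \<Longrightarrow> q \<in> N \<Longrightarrow> p \<noteq> q \<Longrightarrow> dist p q \<ge> \<eta>"
    and eta: "\<eta> > 0" and sub: "N \<subseteq> cball 0 R" and R0: "R \<ge> 0"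
  shows "real (card N) * (\<eta> / 2) ^ DIM('a) \<le> (R + \<eta>) ^ DIM('a)"
proof -
  define vd where "vd = unit_ball_vol (real DIM('a))"
  have vd: "vd > 0" by (simp add: vd_def)
  have R: "R + \<eta> \<ge> 0" using R0 eta by simp
  have disj: "disjoint_family_on (\<lambda>p. ball p (\<eta>/2)) N"
    unfolding disjoint_family_on_def
  proof (intro ballI impI)
    fix p q assume pq: "p \<in> N" "q \<in> N" "p \<noteq> q"
    show "ball p (\<eta>/2) \<inter> ball q (\<eta>/2) = {}"
    proof (rule ccontr)
      assume "ball p (\<eta>/2) \<inter> ball q (\<eta>/2) \<noteq> {}"
      then obtain x where "dist p x < \<eta>/2" "dist q x < \<eta>/2" by auto
      hence "dist p q < \<eta>" using dist_triangle[of p q x] by (simp add: dist_commute)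
      with sep[OF pq] show False by simp
    qed
  qed
  have U: "(\<Union>p\<in>N. ball p (\<eta>/2)) \<subseteq> ball 0 (R + \<eta>)"
  proof
    fix x assume "x \<in> (\<Union>p\<in>N. ball p (\<eta>/2))"
    then obtain p where p: "p \<in> N" "dist p x < \<eta>/2" by auto
    have "dist 0 p \<le> R" using sub p by auto
    hence "dist 0 x < R + \<eta>" using dist_triangle[of 0 x p] p eta by linarith
    thus "x \<in> ball 0 (R + \<eta>)" by simp
  qed
  have "(\<Sum>p\<in>N. emeasure lborel (ball p (\<eta>/2))) = emeasure lborel (\<Union>p\<in>N. ball p (\<eta>/2))"
    by (rule sum_emeasure) (use disj fin in auto)
  also have "\<dots> \<le> emeasure lborel (ball (0::'a) (R + \<eta>))" by (rule emeasure_mono[OF U]) simp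
  finally have "(\<Sum>p\<in>N. ennreal (vd * (\<eta>/2) ^ DIM('a))) \<le> ennreal (vd * (R + \<eta>) ^ DIM('a))"
    using eta R by (simp add: emeasure_ball vd_def)
  hence "ennreal (real (card N) * (vd * (\<eta>/2) ^ DIM('a))) \<le> ennreal (vd * (R + \<eta>) ^ DIM('a))"
    using eta vd by (simp add: ennreal_mult' ennreal_of_nat_eq_real_of_nat)
  hence "real (card N) * (vd * (\<eta>/2) ^ DIM('a)) \<le> vd * (R + \<eta>) ^ DIM('a)"
    using R vd by (subst (asm) ennreal_le_iff) auto
  thus ?thesis using vd by (simp add: mult.left_commute)
qed

lemma net_exists:
  fixes S :: "'a::euclidean_space set"
  assumes sub: "S \<subseteq> cball 0 R" and eta: "\<eta> > 0" and R0: "R \<ge> 0"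
  shows "\<exists>N. finite N \<and> N \<subseteq> S \<and> (\<forall>q\<in>S. \<exists>p\<in>N. dist q p < \<eta>)
            \<and> real (card N) * (\<eta> / 2) ^ DIM('a) \<le> (R + \<eta>) ^ DIM('a)"
proof -
  define F where "F = {N. finite N \<and> N \<subseteq> S \<and> (\<forall>p\<in>N. \<forall>q\<in>N. p \<noteq> q \<longrightarrow> dist p q \<ge> \<eta>)}"
  have bnd: "real (card N) * (\<eta> / 2) ^ DIM('a) \<le> (R + \<eta>) ^ DIM('a)" if "N \<in> F" for N
    using that sub R0 by (intro packing_card[OF _ _ eta]) (auto simp: F_def)
  define b where "b = nat \<lceil>(R + \<eta>) ^ DIM('a) / (\<eta> / 2) ^ DIM('a)\<rceil>"
  have cb: "card N \<le> b" if "N \<in> F" for N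
  proof -
    have pos: "(\<eta> / 2) ^ DIM('a) > 0" using eta by simp
    have "real (card N) \<le> (R + \<eta>) ^ DIM('a) / (\<eta> / 2) ^ DIM('a)"
      using bnd[OF that] pos by (simp add: field_simps)
    thus ?thesis unfolding b_def by linarith
  qed
  have "{} \<in> F" by (simp add: F_def)
  have "\<exists>x. (\<exists>N\<in>F. card N = x) \<and> (\<forall>y. (\<exists>N\<in>F. card N = y) \<longrightarrow> y \<le> x)"
    by (rule Nat.ex_has_greatest_nat[of _ 0 b]) (use \<open>{} \<in> F\<close> cb in force)+
  then obtain N where N: "N \<in> F" and maxN: "\<And>N'. N' \<in> F \<Longrightarrow> card N' \<le> card N" by blast
  have cover: "\<forall>q\<in>S. \<exists>p\<in>N. dist q p < \<eta>"
  proof (rule ccontr)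
    assume "\<not> (\<forall>q\<in>S. \<exists>p\<in>N. dist q p < \<eta>)"
    then obtain q where q: "q \<in> S" "\<And>p. p \<in> N \<Longrightarrow> dist q p \<ge> \<eta>" by force
    have qN: "q \<notin> N" using q(2)[of q] eta by force
    have "insert q N \<in> F" using N q by (auto simp: F_def dist_commute)
    from maxN[OF this] N qN show False by (simp add: F_def)
  qed
  show ?thesis using N cover bnd[OF N] by (auto simp: F_def)
qed

lemma pow_exp_bound:
  fixes q :: real
  assumes "0 \<le> q" "q \<le> 1"
  shows "(1 - q) ^ n \<le> exp (- (real n * q))"
proof -
  have "(1 - q) ^ n \<le> exp (- q) ^ n"
    using assms by (intro power_mono) (use exp_ge_add_one_self[of "-q"] in auto)
  also have "\<dots> = exp (- (real n * q))" by (simp add: exp_of_nat_mult[symmetric])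
  finally show ?thesis .
qed

lemma exp_ln_bound:
  assumes "n > 0" "c * ln (real n) \<le> x"
  shows "exp (- x) \<le> real n powr (- c)"
proof -
  have "exp (- x) \<le> exp (- c * ln (real n))" using assms by simp
  also have "\<dots> = real n powr (- c)" using assms by (simp add: powr_def)
  finally show ?thesis .
qed

lemma good_event:
  fixes f0 :: "'a::euclidean_space \<Rightarrow> real" and N :: "'a set" and A :: "nat \<Rightarrow> 'a set" and n :: nat
  defines "Q \<equiv> density lborel (\<lambda>x. ennreal (f0 x))"
  defines "M \<equiv> PiM {..<n} (\<lambda>_. Q)"
  assumes PQ: "prob_space Q"
    and finN: "finite N" and NS: "N \<subseteq> S" and cover: "\<forall>q\<in>S. \<exists>p\<in>N. dist q p < \<eta>"
    and massb: "\<And>p. p \<in> S \<Longrightarrow> measure Q (ball p \<rho>') \<ge> 8 * ln (real n) / real n"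
    and Ab: "\<And>k. A k \<in> sets (borel :: 'a measure)"
    and n: "n \<ge> 2"
  shows "\<exists>E\<in>sets M. measure M E \<ge> 1 - (real (card N) + real n) * real n powr (-8) \<and>
     (\<forall>\<omega>\<in>E. (\<forall>q\<in>S. \<exists>k<n. dist q (\<omega> k) < \<eta> + \<rho>') \<and>
        (\<forall>k\<in>{1..n}. (\<Sum>i<n. indicator (A k) (\<omega> i)) < real n * measure Q (A k) + real n * (2 * sqrt (ln (real n) / real n))))"
proof -
  interpret Q: prob_space Q by (rule PQ)
  interpret M: prob_space M unfolding M_def by (rule prob_space_PiM) (rule PQ)
  define t where "t = 2 * sqrt (ln (real n) / real n)"
  have t0: "t \<ge> 0" using n by (simp add: t_def)
  have n0: "n > 0" using n by simp
  have lnpos: "ln (real n) > 0" using n by simp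
  define F where "F = (\<lambda>p. {\<omega> \<in> space M. \<forall>k<n. \<omega> k \<notin> ball p \<rho>'})"
  define G where "G = (\<lambda>k. {\<omega> \<in> space M. (\<Sum>i<n. indicator (A k) (\<omega> i)) \<ge> real n * measure Q (A k) + real n * t})"
  have sQ: "sets Q = sets borel" by (simp add: Q_def)
  have Fm: "F p \<in> sets M" for p
  proof -
    have "F p = space M \<inter> (\<Inter>k<n. (\<lambda>\<omega>. \<omega> k) -` (UNIV - ball p \<rho>') \<inter> space M)"
      using n0 by (auto simp: F_def)
    also have "\<dots> \<in> sets M"
      unfolding M_def by (intro sets.Int sets.top sets.countable_INT') (use n0 in \<open>auto intro!: measurable_sets[OF measurable_component_singleton] simp: sQ\<close>)
    finally show ?thesis .
  qed
  have Gm: "G k \<in> sets M" for k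
  proof -
    have [measurable]: "A k \<in> sets Q" using Ab sQ by simp
    have "(\<lambda>\<omega>. \<Sum>i<n. indicator (A k) (\<omega> i) :: real) \<in> borel_measurable M"
      unfolding M_def by measurable
    thus ?thesis unfolding G_def by measurable
  qed
  have Fb: "measure M (F p) \<le> real n powr (-8)" if "p \<in> N" for p
  proof -
    have "measure M (F p) = (1 - measure Q (ball p \<rho>')) ^ n"
      unfolding F_def M_def Q_def by (rule cov_fail_measure) (use PQ in \<open>auto simp: Q_def\<close>)
    also have "\<dots> \<le> exp (- (real n * measure Q (ball p \<rho>')))"
      by (rule pow_exp_bound) auto
    also have "\<dots> \<le> real n powr (-8)"
    proof (rule exp_ln_bound[OF n0])
      have "measure Q (ball p \<rho>') \<ge> 8 * ln (real n) / real n" using massb that NS by auto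
      hence "real n * measure Q (ball p \<rho>') \<ge> real n * (8 * ln (real n) / real n)"
        by (intro mult_left_mono) auto
      thus "8 * ln (real n) \<le> real n * measure Q (ball p \<rho>')" using n0 by simp
    qed
    finally show ?thesis .
  qed
  have Gb: "measure M (G k) \<le> real n powr (-8)" for k
  proof -
    have "measure M (G k) \<le> exp (- 2 * real n * t\<^sup>2)"
      unfolding G_def M_def by (rule hoeffding_count[OF PQ _ n0 t0]) (simp add: sQ Ab)
    also have "\<dots> = exp (- (8 * ln (real n)))"
      using n0 lnpos by (simp add: t_def power2_eq_square)
    also have "\<dots> \<le> real n powr (-8)" by (rule exp_ln_bound[OF n0]) simp
    finally show ?thesis .
  qed
  define Bad where "Bad = (\<Union>p\<in>N. F p) \<union> (\<Union>k\<in>{1..n}. G k)"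
  have Badm: "Bad \<in> sets M" unfolding Bad_def using Fm Gm finN by (intro sets.Un sets.finite_UN) auto
  have "measure M Bad \<le> measure M (\<Union>p\<in>N. F p) + measure M (\<Union>k\<in>{1..n}. G k)"
    unfolding Bad_def by (rule measure_Un_le) (use Fm Gm finN in auto)
  also have "\<dots> \<le> (\<Sum>p\<in>N. measure M (F p)) + (\<Sum>k\<in>{1..n}. measure M (G k))"
    by (intro add_mono measure_UNION_le) (use Fm Gm finN in auto)
  also have "\<dots> \<le> (\<Sum>p\<in>N. real n powr (-8)) + (\<Sum>k\<in>{1..n}. real n powr (-8))"
    by (intro add_mono sum_mono Fb Gb) auto
  also have "\<dots> = (real (card N) + real n) * real n powr (-8)" by (simp add: algebra_simps)
  finally have mB: "measure M Bad \<le> (real (card N) + real n) * real n powr (-8)" .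
  define E where "E = space M - Bad"
  have Em: "E \<in> sets M" unfolding E_def using Badm by auto
  have "measure M E = 1 - measure M Bad" unfolding E_def by (rule M.prob_compl[OF Badm])
  hence mE: "measure M E \<ge> 1 - (real (card N) + real n) * real n powr (-8)" using mB by simp
  have goodw: "(\<forall>q\<in>S. \<exists>k<n. dist q (\<omega> k) < \<eta> + \<rho>') \<and>
        (\<forall>k\<in>{1..n}. (\<Sum>i<n. indicator (A k) (\<omega> i)) < real n * measure Q (A k) + real n * t)" if w: "\<omega> \<in> E" for \<omega>
  proof
    have wsp: "\<omega> \<in> space M" using w by (simp add: E_def)
    show "\<forall>q\<in>S. \<exists>k<n. dist q (\<omega> k) < \<eta> + \<rho>'"
    proof
      fix q assume q: "q \<in> S"
      then obtain p where p: "p \<in> N" "dist q p < \<eta>" using cover by auto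
      have "\<omega> \<notin> F p" using w p by (auto simp: E_def Bad_def)
      then obtain k where k: "k < n" "\<omega> k \<in> ball p \<rho>'" using wsp by (auto simp: F_def)
      have "dist q (\<omega> k) < \<eta> + \<rho>'" using p k dist_triangle[of q "\<omega> k" p] by simp
      with k show "\<exists>k<n. dist q (\<omega> k) < \<eta> + \<rho>'" by auto
    qed
    show "\<forall>k\<in>{1..n}. (\<Sum>i<n. indicator (A k) (\<omega> i)) < real n * measure Q (A k) + real n * t"
    proof
      fix k assume k: "k \<in> {1..n}"
      have "\<omega> \<notin> G k" using w k by (auto simp: E_def Bad_def)
      thus "(\<Sum>i<n. indicator (A k) (\<omega> i)) < real n * measure Q (A k) + real n * t"
        using wsp by (auto simp: G_def)
    qed
  qed
  show ?thesis using Em mE goodw unfolding t_def by blast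
qed

lemma rate_facts:
  assumes lam: "lam > 0" and vd: "vd > 0" and d: "d \<ge> 1" and n: "n \<ge> 2"
  shows "r_rate n lam d vd > 0" "(r_rate n lam d vd / 2) ^ d = 16 * real d * ln (real n) / (lam * vd * real n)"
proof -
  define s where "s = 16 * real d * ln (real n) / (lam * vd * real n)"
  have s: "s > 0" using lam vd d n by (simp add: s_def)
  have r: "r_rate n lam d vd = 2 * s powr (1 / real d)" by (simp add: r_rate_def s_def)
  show "r_rate n lam d vd > 0" using s r by simp
  have "(r_rate n lam d vd / 2) ^ d = (s powr (1 / real d)) ^ d" using r by simp
  also have "\<dots> = (s powr (1 / real d)) powr (real d)" using s by (simp add: powr_realpow)
  also have "\<dots> = s" using s d by (simp add: powr_powr)
  finally show "(r_rate n lam d vd / 2) ^ d = 16 * real d * ln (real n) / (lam * vd * real n)" by (simp add: s_def)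
qed

lemma rate_small:
  assumes lam: "lam > 0" and vd: "vd > 0" and d: "d \<ge> 1" and c: "c > 0"
  shows "eventually (\<lambda>n. r_rate n lam d vd \<le> c) sequentially"
proof -
  define e where "e = (c / 2) ^ d * lam * vd / (16 * real d)"
  have e: "e > 0" using c lam vd d by (simp add: e_def)
  have lim: "((\<lambda>n. ln (real n) / real n) \<longlongrightarrow> 0) sequentially"
    by (rule filterlim_compose[OF ln_x_over_x_tendsto_0 filterlim_real_sequentially])
  have ev: "eventually (\<lambda>n. ln (real n) / real n < e) sequentially"
    by (rule order_tendstoD(2)[OF lim e])
  have ev2: "eventually (\<lambda>n::nat. n \<ge> 2) sequentially" by (rule eventually_ge_at_top)
  show ?thesis using ev ev2
  proof eventually_elim
    case (elim n)
    define s where "s = 16 * real d * ln (real n) / (lam * vd * real n)"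
    have s0: "s > 0" using lam vd d elim by (simp add: s_def)
    have "s = (16 * real d / (lam * vd)) * (ln (real n) / real n)" by (simp add: s_def field_simps)
    also have "\<dots> \<le> (16 * real d / (lam * vd)) * e"
      using elim lam vd by (intro mult_left_mono) auto
    also have "\<dots> = (c / 2) ^ d" using lam vd d by (simp add: e_def field_simps)
    finally have sle: "s \<le> (c / 2) ^ d" .
    have "s powr (1 / real d) \<le> ((c / 2) ^ d) powr (1 / real d)"
      using s0 sle by (intro powr_mono2) auto
    also have "((c / 2) ^ d) powr (1 / real d) = c / 2"
    proof -
      have "((c / 2) ^ d) powr (1 / real d) = ((c / 2) powr real d) powr (1 / real d)"
        using c by (simp add: powr_realpow)
      also have "\<dots> = c / 2" using c d by (simp add: powr_powr)
      finally show ?thesis .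
    qed
    finally show ?case by (simp add: r_rate_def s_def)
  qed
qed

lemma bernoulli_quarter:
  assumes d: "d \<ge> (1::nat)"
  shows "(1 - 1 / (4 * real d)) ^ d \<ge> 3 / 4"
proof -
  have "1 + real d * (- 1 / (4 * real d)) \<le> (1 + (- 1 / (4 * real d))) ^ d"
    by (rule Bernoulli_inequality) (use d in \<open>simp add: field_simps\<close>)
  moreover have "1 + real d * (- 1 / (4 * real d)) = 3 / 4" using d by (simp add: field_simps)
  ultimately show ?thesis by simp
qed

lemma count_as_sum:
  fixes n :: nat
  shows "(\<Sum>i<n. indicator A (X i) :: real) = real (card {i. i < n \<and> X i \<in> A})"
proof -
  have "(\<Sum>i<n. indicator A (X i) :: real) = (\<Sum>i\<in>{i. i < n \<and> X i \<in> A}. 1)"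
  proof (rule sum.mono_neutral_cong_right)
    show "finite {..<n}" by simp
    show "{i. i < n \<and> X i \<in> A} \<subseteq> {..<n}" by auto
    show "\<forall>i\<in>{..<n} - {i. i < n \<and> X i \<in> A}. indicator A (X i) = (0::real)" by (auto simp: indicator_def)
    show "\<And>x. x \<in> {i. i < n \<and> X i \<in> A} \<Longrightarrow> indicator A (X x) = (1::real)" by (auto simp: indicator_def)
  qed
  thus ?thesis by simp
qed

lemma final_arith:
  fixes D c C eb H \<kappa> \<gamma> \<delta>a t :: real and n :: nat
  assumes D: "D \<le> 6 * c / (real n - 1)" and c: "c \<le> real n * C * \<kappa> + C * eb / 2 + real n * t"
    and c0: "c \<ge> 0" and n: "n \<ge> 16" and C: "C > 0" and eb: "eb > 0" and H: "H > 0"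
    and kap: "\<kappa> = \<gamma> + H * \<delta>a" and g: "\<gamma> \<ge> 0" and da: "\<delta>a \<ge> 0"
    and t: "t = 2 * sqrt (ln (real n) / real n)" and inv: "1 / real n \<le> sqrt (ln (real n) / real n)"
  shows "D \<le> 7 * C * (1 + H) * max \<gamma> \<delta>a + 7 * (C * eb / 2 + 2) * sqrt (ln (real n) / real n)"
proof -
  define L where "L = sqrt (ln (real n) / real n)"
  have npos: "real n > 0" using n by simp
  have "6 * c / (real n - 1) \<le> 7 * c / real n"
    using n c0 by (simp add: divide_simps) (simp add: algebra_simps mult_left_mono)
  also have "7 * c / real n \<le> 7 * (real n * C * \<kappa> + C * eb / 2 + real n * t) / real n"
    using c npos by (intro divide_right_mono) auto
  also have "\<dots> = 7 * (C * \<kappa>) + 7 * (C * eb / 2) * (1 / real n) + 7 * t"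
    using npos by (simp add: field_simps)
  also have "\<dots> \<le> 7 * (C * ((1 + H) * max \<gamma> \<delta>a)) + 7 * (C * eb / 2) * L + 7 * t"
  proof -
    have "\<kappa> \<le> (1 + H) * max \<gamma> \<delta>a"
    proof -
      have "H * \<delta>a \<le> H * max \<gamma> \<delta>a" using H by (intro mult_left_mono) auto
      thus ?thesis using kap by (simp add: algebra_simps)
    qed
    hence "C * \<kappa> \<le> C * ((1 + H) * max \<gamma> \<delta>a)" using C by (intro mult_left_mono) auto
    moreover have "(C * eb / 2) * (1 / real n) \<le> (C * eb / 2) * L"
      using inv C eb by (intro mult_left_mono) (auto simp: L_def)
    ultimately show ?thesis by linarith
  qed
  also have "\<dots> = 7 * C * (1 + H) * max \<gamma> \<delta>a + 7 * (C * eb / 2 + 2) * L"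
    by (simp add: t L_def algebra_simps)
  finally show ?thesis using D by (simp add: L_def)
qed

lemma inv_le_sqrt:
  assumes n: "n \<ge> (16::nat)"
  shows "1 / real n \<le> sqrt (ln (real n) / real n)"
proof -
  have lnn: "ln (real n) \<ge> 1"
  proof -
    have "exp 1 \<le> (3::real)" using exp_le by simp
    also have "\<dots> \<le> real n" using n by simp
    finally show ?thesis using n by (simp add: ln_ge_iff)
  qed
  have npos: "real n > 0" using n by simp
  have "(1 / real n)\<^sup>2 \<le> ln (real n) / real n"
  proof -
    have "(1 / real n)\<^sup>2 = (1 / real n) * (1 / real n)" by (simp add: power2_eq_square)
    also have "\<dots> \<le> 1 * (1 / real n)" using npos n by (intro mult_right_mono) auto
    also have "\<dots> \<le> ln (real n) / real n" using lnn npos by (simp add: divide_right_mono)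
    finally show ?thesis .
  qed
  hence "sqrt ((1 / real n)\<^sup>2) \<le> sqrt (ln (real n) / real n)" by (rule real_sqrt_le_mono)
  thus ?thesis using npos by simp
qed

lemma large_n:
  fixes f0 :: "'a::euclidean_space \<Rightarrow> real"
  assumes nonneg: "\<And>x. f0 x \<ge> 0" and int: "integrable lborel f0" and dens: "integral\<^sup>L lborel f0 = 1"
    and hold: "\<And>x y. \<bar>f0 x - f0 y\<bar> \<le> H * dist x y powr \<alpha>" and H: "H > 0" and al: "\<alpha> > 0"
    and C: "C > 0" and eb: "eb > 0"
    and ii: "\<forall>\<epsilon>. 0 < \<epsilon> \<and> \<epsilon> < eb \<longrightarrow> (LINT x:{x. \<bar>f0 x - lam\<bar> \<le> \<epsilon>}|lborel. f0 x) \<le> C * \<epsilon>"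
    and iii: "\<forall>lam_l lam_h. lam - eb \<le> lam_l \<and> lam_l < lam_h \<and> lam_h \<le> lam + eb \<longrightarrow>
           (\<forall>x\<in>level_set f0 lam_h. \<forall>y\<in>level_set f0 lam_h.
              (\<not> connected_component (level_set f0 lam_h) x y
                 \<longrightarrow> \<not> connected_component (level_set f0 lam_l) x y) \<and>
              (connected_component (level_set f0 lam_l) x y
                 \<longrightarrow> connected_component (level_set f0 lam_h) x y))"
    and SR: "level_set f0 lam \<subseteq> cball 0 R" and R: "R \<ge> 0" and lam: "lam > 0"
    and n: "n \<ge> 16"
    and r1: "r_rate n lam DIM('a) (unit_ball_vol (real DIM('a))) \<le> 1"
    and rH: "H * r_rate n lam DIM('a) (unit_ball_vol (real DIM('a))) powr \<alpha> \<le> lam / 3"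
    and nK: "real n ^ 5 \<ge> (R + 1) ^ DIM('a) * (16 * real DIM('a)) ^ DIM('a) * lam * unit_ball_vol (real DIM('a)) + 1"
    and dbar: "\<And>\<delta>. 0 \<le> \<delta> \<Longrightarrow> \<delta> < \<delta>bar \<Longrightarrow> H * \<delta> powr \<alpha> \<le> eb / 4"
    and am: "0 < a" "a \<le> 1" "0 < m" "m \<le> 1"
  shows "holds_with_prob_at_least (sample_space f0 n)
        (\<lambda>X. \<forall>\<delta> \<gamma>. r_rate n lam DIM('a) (unit_ball_vol (real DIM('a))) \<le> \<delta> \<and> \<delta> < \<delta>bar
                 \<and> 0 < \<gamma> \<and> \<gamma> < eb / 4 \<longrightarrow>
             (\<forall>f. (\<forall>x. \<bar>f x - f0 x\<bar> \<le> \<gamma>) \<longrightarrow>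
                binder_D a m n (surrogate_clustering f lam \<delta> X n) (level_clustering f0 lam X n)
                  \<le> 7 * C * (1 + H) * max \<gamma> (\<delta> powr \<alpha>) + 7 * (C * eb / 2 + 2) * sqrt (ln (real n) / real n)))
        (1 - (1 + real n) / (real n)\<^sup>2)"
proof -
  define d where "d = DIM('a)"
  define vd where "vd = unit_ball_vol (real d)"
  define Q where "Q = density lborel (\<lambda>x. ennreal (f0 x))"
  define S where "S = level_set f0 lam"
  define r where "r = r_rate n lam d vd"
  define s where "s = 16 * real d * ln (real n) / (lam * vd * real n)"
  define K where "K = (R + 1) ^ d * (16 * real d) ^ d * lam * vd"
  have d1: "d \<ge> 1" by (simp add: d_def DIM_positive)
  have vd: "vd > 0" by (simp add: vd_def)
  have n2: "n \<ge> 2" using n by simp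
  have lnn: "ln (real n) \<ge> 1"
  proof -
    have "exp 1 \<le> (3::real)" using exp_le by simp
    also have "\<dots> \<le> real n" using n by simp
    finally show ?thesis using n by (simp add: ln_ge_iff)
  qed
  have r0: "r > 0" and rs: "(r / 2) ^ d = s"
    using rate_facts[OF lam vd d1 n2] by (simp_all add: r_def s_def)
  have s0: "s > 0" using lam vd d1 n lnn by (simp add: s_def)
  have r1': "r \<le> 1" and rH': "H * r powr \<alpha> \<le> lam / 3" using r1 rH by (simp_all add: r_def d_def vd_def)
  have PQ: "prob_space Q" unfolding Q_def by (rule dens_prob[OF nonneg int dens])
  have f0m[measurable]: "f0 \<in> borel_measurable borel"
    using borel_measurable_integrable[OF int] by simp
  define \<eta> where "\<eta> = r / (16 * real d)"
  define \<rho>' where "\<rho>' = r / 2 * (1 - 1 / (4 * real d))"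
  have eta0: "\<eta> > 0" using r0 d1 by (simp add: \<eta>_def)
  have eta1: "\<eta> \<le> 1" using r0 r1' d1 by (simp add: \<eta>_def field_simps)
  have rho'0: "\<rho>' > 0" using r0 d1 by (simp add: \<rho>'_def field_simps)
  have rho'r: "\<rho>' \<le> r" using r0 d1 by (simp add: \<rho>'_def field_simps)
  obtain N where finN: "finite N" and NS: "N \<subseteq> S" and cover: "\<forall>q\<in>S. \<exists>p\<in>N. dist q p < \<eta>"
      and cardN: "real (card N) * (\<eta> / 2) ^ d \<le> (R + \<eta>) ^ d"
    using net_exists[OF SR[folded S_def] eta0 R] by (auto simp: d_def)
  define A where "A = (\<lambda>k::nat. {x. \<bar>f0 x - lam\<bar> \<le> real k * eb / (2 * real n)})"
  have Ab: "A k \<in> sets (borel :: 'a measure)" for k unfolding A_def by measurable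
  have massb: "measure Q (ball p \<rho>') \<ge> 8 * ln (real n) / real n" if p: "p \<in> S" for p
  proof -
    have lb: "f0 x \<ge> 2 * lam / 3" if x: "x \<in> ball p \<rho>'" for x
    proof -
      have "dist p x \<le> r" using x rho'r by simp
      from holder_bound[OF hold _ al this] H have "f0 x \<ge> f0 p - H * r powr \<alpha>" by simp
      moreover have "f0 p \<ge> lam" using p by (simp add: S_def level_set_def)
      ultimately show ?thesis using rH' by linarith
    qed
    have m1: "measure Q (ball p \<rho>') \<ge> 2 * lam / 3 * (vd * \<rho>' ^ d)"
      unfolding Q_def vd_def d_def using dens_measure_ball_ge[OF nonneg int _ lb] lam rho'0 by simp
    have m2: "\<rho>' ^ d \<ge> s * (3 / 4)"
    proof -
      have "\<rho>' ^ d = (r / 2) ^ d * (1 - 1 / (4 * real d)) ^ d" unfolding \<rho>'_def by (rule power_mult_distrib)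
      also have "\<dots> = s * (1 - 1 / (4 * real d)) ^ d" using rs by simp
      also have "\<dots> \<ge> s * (3 / 4)" using bernoulli_quarter[OF d1] s0 by (intro mult_left_mono) auto
      finally show ?thesis .
    qed
    have m3: "2 * lam / 3 * (vd * \<rho>' ^ d) \<ge> 2 * lam / 3 * (vd * (s * (3 / 4)))"
      using m2 lam vd by (intro mult_left_mono) auto
    have m4: "2 * lam / 3 * (vd * (s * (3 / 4))) = real d * (8 * ln (real n) / real n)"
    proof -
      have "2 * lam / 3 * (vd * (s * (3 / 4))) = (lam * vd) * s / 2" by simp
      also have "\<dots> = real d * (8 * ln (real n) / real n)"
        using lam vd n unfolding s_def by (simp add: divide_simps)
      finally show ?thesis .
    qed
    have m5: "real d * (8 * ln (real n) / real n) \<ge> 8 * ln (real n) / real n"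
    proof -
      have "8 * ln (real n) / real n \<ge> 0" using lnn by simp
      thus ?thesis using mult_right_mono[of 1 "real d" "8 * ln (real n) / real n"] d1 by simp
    qed
    show ?thesis using m1 m3 m4 m5 by linarith
  qed
  note GE = good_event[OF PQ[unfolded Q_def] finN NS cover massb[unfolded Q_def] Ab n2, folded Q_def]
  from GE obtain E where Em: "E \<in> sets (PiM {..<n} (\<lambda>_. Q))"
      and rest: "measure (PiM {..<n} (\<lambda>_. Q)) E \<ge> 1 - (real (card N) + real n) * real n powr (-8) \<and>
     (\<forall>\<omega>\<in>E. (\<forall>q\<in>S. \<exists>k<n. dist q (\<omega> k) < \<eta> + \<rho>') \<and>
        (\<forall>k\<in>{1..n}. (\<Sum>i<n. indicator (A k) (\<omega> i)) < real n * measure Q (A k) + real n * (2 * sqrt (ln (real n) / real n))))"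
    by (rule bexE)
  have mE: "measure (PiM {..<n} (\<lambda>_. Q)) E \<ge> 1 - (real (card N) + real n) * real n powr (-8)"
    using rest by (rule conjunct1)
  have Eprop: "(\<forall>q\<in>S. \<exists>k<n. dist q (\<omega> k) < \<eta> + \<rho>') \<and>
        (\<forall>k\<in>{1..n}. (\<Sum>i<n. indicator (A k) (\<omega> i)) < real n * measure Q (A k) + real n * (2 * sqrt (ln (real n) / real n)))"
    if "\<omega> \<in> E" for \<omega>
    using conjunct2[OF rest] that by (rule bspec)
  have cardK: "real (card N) \<le> K * real n"
  proof -
    have D16: "(16 * real d) ^ d > 0" using d1 by simp
    have "\<eta> / 2 = (r / 2) / (16 * real d)" by (simp add: \<eta>_def)
    hence "(\<eta> / 2) ^ d = ((r / 2) / (16 * real d)) ^ d" by simp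
    also have "\<dots> = (r / 2) ^ d / (16 * real d) ^ d" by (rule power_divide)
    finally have e2: "(\<eta> / 2) ^ d = s / (16 * real d) ^ d" using rs by simp
    have "(R + \<eta>) ^ d \<le> (R + 1) ^ d" by (rule power_mono) (use eta1 R eta0 in auto)
    hence c1: "real (card N) * (s / (16 * real d) ^ d) \<le> (R + 1) ^ d" using cardN e2 by simp
    have c2: "real (card N) \<le> (R + 1) ^ d * (16 * real d) ^ d / s"
      using c1 s0 D16 by (simp add: field_simps)
    have c3: "(R + 1) ^ d * (16 * real d) ^ d / s = K * real n / (16 * real d * ln (real n))"
      using lam vd n d1 lnn unfolding K_def s_def by (simp add: divide_simps)
    have L1: "16 * real d * ln (real n) \<ge> 1"
    proof -
      have "16 * real d * ln (real n) \<ge> 16 * 1 * 1" using d1 lnn by (intro mult_mono) auto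
      thus ?thesis by simp
    qed
    have K0: "K * real n \<ge> 0" using R lam vd by (simp add: K_def)
    have c4: "K * real n / (16 * real d * ln (real n)) \<le> K * real n / 1"
      by (rule divide_left_mono) (use L1 K0 in auto)
    show ?thesis using c2 c3 c4 by simp
  qed
  have budget: "1 - (real (card N) + real n) * real n powr (-8) \<ge> 1 - (1 + real n) / (real n)\<^sup>2"
  proof -
    have npos: "real n > 0" using n by simp
    have p8: "real n powr 8 = real n ^ 8" using powr_realpow[of "real n" 8] npos by simp
    have np: "real n powr (-8) = 1 / real n ^ 8" by (simp add: powr_minus p8 divide_inverse)
    have e8: "real n ^ 8 = real n * real n ^ 7" using power_add[of "real n" 1 7] by simp
    have e7: "real n ^ 7 = real n ^ 5 * (real n)\<^sup>2" using power_add[of "real n" 5 2] by simp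
    have K0: "K \<ge> 0" using R lam vd by (simp add: K_def)
    have "(real (card N) + real n) * real n powr (-8) \<le> (K * real n + real n) * (1 / real n ^ 8)"
      unfolding np using cardK by (intro mult_right_mono) auto
    also have "\<dots> = (K + 1) / real n ^ 7" unfolding e8 using npos by (simp add: field_simps)
    also have "\<dots> \<le> real n ^ 5 / real n ^ 7" using nK npos by (intro divide_right_mono) (auto simp: K_def d_def vd_def)
    also have "\<dots> = real n ^ 5 / (real n ^ 5 * (real n)\<^sup>2)" by (simp only: e7)
    also have "\<dots> = 1 / (real n)\<^sup>2" by (rule nonzero_divide_mult_cancel_left) (use npos in simp)
    also have "\<dots> \<le> (1 + real n) / (real n)\<^sup>2" by (intro divide_right_mono) auto
    finally show ?thesis by simp
  qed
  show ?thesis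
    unfolding holds_with_prob_at_least_def sample_space_def
  proof (intro bexI[of _ E] conjI)
    show "E \<in> sets (PiM {..<n} (\<lambda>_. density lborel (\<lambda>x. ennreal (f0 x))))" using Em by (simp add: Q_def)
    show "measure (PiM {..<n} (\<lambda>_. density lborel (\<lambda>x. ennreal (f0 x)))) E \<ge> 1 - (1 + real n) / (real n)\<^sup>2"
      using mE budget by (simp add: Q_def)
    have Esp: "E \<subseteq> space (PiM {..<n} (\<lambda>_. density lborel (\<lambda>x. ennreal (f0 x))))"
      using sets.sets_into_space[OF Em] by (simp add: Q_def space_PiM)
    show "E \<subseteq> {X \<in> space (PiM {..<n} (\<lambda>_. density lborel (\<lambda>x. ennreal (f0 x)))).
        \<forall>\<delta> \<gamma>. r_rate n lam DIM('a) (unit_ball_vol (real DIM('a))) \<le> \<delta> \<and> \<delta> < \<delta>bar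
                 \<and> 0 < \<gamma> \<and> \<gamma> < eb / 4 \<longrightarrow>
             (\<forall>f. (\<forall>x. \<bar>f x - f0 x\<bar> \<le> \<gamma>) \<longrightarrow>
                binder_D a m n (surrogate_clustering f lam \<delta> X n) (level_clustering f0 lam X n)
                  \<le> 7 * C * (1 + H) * max \<gamma> (\<delta> powr \<alpha>) + 7 * (C * eb / 2 + 2) * sqrt (ln (real n) / real n))}"
    proof (intro subsetI CollectI conjI allI impI)
      fix \<omega> assume w: "\<omega> \<in> E"
      show "\<omega> \<in> space (PiM {..<n} (\<lambda>_. density lborel (\<lambda>x. ennreal (f0 x))))" using w Esp by blast
      fix \<delta> \<gamma> f
      assume cond: "r_rate n lam DIM('a) (unit_ball_vol (real DIM('a))) \<le> \<delta> \<and> \<delta> < \<delta>bar \<and> 0 < \<gamma> \<and> \<gamma> < eb / 4"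
        and fg: "\<forall>x. \<bar>f x - f0 x\<bar> \<le> \<gamma>"
      have rd: "r \<le> \<delta>" and db: "\<delta> < \<delta>bar" and g0: "0 < \<gamma>" and gb: "\<gamma> < eb / 4"
        using cond by (simp_all add: r_def d_def vd_def)
      have d0: "\<delta> > 0" using rd r0 by simp
      have Hd: "H * \<delta> powr \<alpha> \<le> eb / 4" using dbar[OF _ db] d0 by simp
      define \<kappa> where "\<kappa> = \<gamma> + H * \<delta> powr \<alpha>"
      have kap_lt: "\<kappa> < eb / 2" using Hd gb by (simp add: \<kappa>_def)
      have kap0: "\<kappa> > 0"
      proof -
        have "H * \<delta> powr \<alpha> \<ge> 0" using H by simp
        thus ?thesis using g0 by (simp add: \<kappa>_def)
      qed
      define \<rho> where "\<rho> = \<eta> + \<rho>'"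
      have rho0: "\<rho> > 0" using eta0 rho'0 by (simp add: \<rho>_def)
      have rho2: "2 * \<rho> < \<delta>"
      proof -
        have "2 * \<rho> = r - r / (8 * real d)" using d1 by (simp add: \<rho>_def \<eta>_def \<rho>'_def field_simps)
        also have "\<dots> < r" using r0 d1 by simp
        finally show ?thesis using rd by simp
      qed
      have EP: "(\<forall>q\<in>S. \<exists>k<n. dist q (\<omega> k) < \<eta> + \<rho>') \<and>
        (\<forall>k\<in>{1..n}. (\<Sum>i<n. indicator (A k) (\<omega> i)) < real n * measure Q (A k) + real n * (2 * sqrt (ln (real n) / real n)))"
        using Eprop[OF w] .
      have cov: "\<forall>q\<in>level_set f0 lam. \<exists>k<n. dist q (\<omega> k) < \<rho>" using EP by (simp add: S_def \<rho>_def)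
      have Dle: "binder_D a m n (surrogate_clustering f lam \<delta> \<omega> n) (level_clustering f0 lam \<omega> n)
         \<le> 6 * real (card {i. i < n \<and> \<bar>f0 (\<omega> i) - lam\<bar> \<le> \<kappa>}) / (real n - 1)"
        by (rule D_bound_det[OF hold _ al _ g0 \<kappa>_def _ rho0 rho2 cov iii _ _ _ _ n2])
           (use H fg kap_lt eb am in auto)
      define k where "k = nat \<lceil>2 * real n * \<kappa> / eb\<rceil>"
      have npos: "real n > 0" using n by simp
      have k1: "k \<ge> 1"
      proof -
        have "2 * real n * \<kappa> / eb > 0" using kap0 eb npos by simp
        hence c1: "\<lceil>2 * real n * \<kappa> / eb\<rceil> \<ge> 1" by (simp add: one_le_ceiling)
        show ?thesis unfolding k_def using c1 by (subst le_nat_iff) auto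
      qed
      have kn: "k \<le> n"
      proof -
        have h: "2 * real n * \<kappa> / eb \<le> real n" using kap_lt eb npos by (simp add: field_simps)
        show ?thesis unfolding k_def using h by (simp add: nat_le_iff ceiling_le_iff)
      qed
      define kk where "kk = real k * eb / (2 * real n)"
      have kc: "real k = of_int \<lceil>2 * real n * \<kappa> / eb\<rceil>"
      proof -
        have "2 * real n * \<kappa> / eb \<ge> 0" using kap0 eb npos by simp
        hence "\<lceil>2 * real n * \<kappa> / eb\<rceil> \<ge> 0" by simp
        thus ?thesis unfolding k_def by (simp add: of_nat_nat)
      qed
      have kk_ge: "\<kappa> \<le> kk"
      proof -
        have "2 * real n * \<kappa> / eb \<le> real k" unfolding kc by (rule le_of_int_ceiling)
        thus ?thesis using eb npos by (simp add: kk_def field_simps)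
      qed
      have kk_lt: "kk < \<kappa> + eb / (2 * real n)"
      proof -
        have "real k < 2 * real n * \<kappa> / eb + 1" unfolding kc using ceiling_correct[of "2 * real n * \<kappa> / eb"] by linarith
        thus ?thesis using eb npos by (simp add: kk_def field_simps)
      qed
      have kk_eb: "kk < eb"
      proof -
        have "eb / (2 * real n) \<le> eb / 2" using eb n by (intro divide_left_mono) auto
        thus ?thesis using kk_lt kap_lt by linarith
      qed
      have kk0: "kk > 0" using kk_ge kap0 by simp
      have Akb: "A k \<in> sets (borel :: 'a measure)" by (rule Ab)
      have mA: "measure Q (A k) \<le> C * kk"
      proof -
        have Aeq: "A k = {x. \<bar>f0 x - lam\<bar> \<le> kk}" by (simp add: A_def kk_def)
        have "measure Q (A k) = (LINT x:A k|lborel. f0 x)" unfolding Q_def by (rule dens_measure[OF nonneg int Akb])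
        also have "\<dots> = (LINT x:{x. \<bar>f0 x - lam\<bar> \<le> kk}|lborel. f0 x)" unfolding Aeq ..
        also have "(LINT x:{x. \<bar>f0 x - lam\<bar> \<le> kk}|lborel. f0 x) \<le> C * kk" using ii kk0 kk_eb by blast
        finally show ?thesis .
      qed
      define c where "c = real (card {i. i < n \<and> \<bar>f0 (\<omega> i) - lam\<bar> \<le> \<kappa>})"
      have cle: "c \<le> real n * C * \<kappa> + C * eb / 2 + real n * (2 * sqrt (ln (real n) / real n))"
      proof -
        have "card {i. i < n \<and> \<bar>f0 (\<omega> i) - lam\<bar> \<le> \<kappa>} \<le> card {i. i < n \<and> \<omega> i \<in> A k}"
          by (rule card_mono) (use kk_ge in \<open>auto simp: A_def kk_def\<close>)
        hence "c \<le> (\<Sum>i<n. indicator (A k) (\<omega> i))" by (simp add: c_def count_as_sum)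
        also have "\<dots> < real n * measure Q (A k) + real n * (2 * sqrt (ln (real n) / real n))"
          using EP k1 kn by auto
        also have "real n * measure Q (A k) \<le> real n * (C * kk)" using mA npos by (intro mult_left_mono) auto
        also have "real n * (C * kk) \<le> real n * (C * (\<kappa> + eb / (2 * real n)))"
          using kk_lt C npos by (intro mult_left_mono) auto
        also have "real n * (C * (\<kappa> + eb / (2 * real n))) = real n * C * \<kappa> + C * eb / 2"
          using npos by (simp add: field_simps)
        finally show ?thesis by simp
      qed
      show "binder_D a m n (surrogate_clustering f lam \<delta> \<omega> n) (level_clustering f0 lam \<omega> n)
                  \<le> 7 * C * (1 + H) * max \<gamma> (\<delta> powr \<alpha>) + 7 * (C * eb / 2 + 2) * sqrt (ln (real n) / real n)"
        by (rule final_arith[OF Dle[folded c_def] cle _ n C eb H \<kappa>_def _ _ refl inv_le_sqrt[OF n]])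
           (use g0 in \<open>auto simp: c_def\<close>)
    qed
  qed
qed

lemma holds_mono:
  assumes "holds_with_prob_at_least M P p" "\<And>x. x \<in> space M \<Longrightarrow> P x \<Longrightarrow> Q x"
  shows "holds_with_prob_at_least M Q p"
  using assms unfolding holds_with_prob_at_least_def by blast

lemma holds_trivial:
  assumes "prob_space M" "\<And>x. x \<in> space M \<Longrightarrow> P x" "p \<le> 1"
  shows "holds_with_prob_at_least M P p"
proof -
  interpret prob_space M by (rule assms(1))
  show ?thesis unfolding holds_with_prob_at_least_def
    using assms(2,3) by (intro bexI[of _ "space M"]) (auto simp: prob_space)
qed

theorem theorem3:
  fixes f0 :: "'d::euclidean_space \<Rightarrow> real"
    and lam \<alpha> :: real
  assumes lam_pos: "lam > 0"
    and nonneg: "\<And>x. f0 x \<ge> 0"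
    and integrable: "integrable lborel f0"
    and density: "integral\<^sup>L lborel f0 = 1"
    and cont: "continuous_on UNIV f0"
    and vanish: "(f0 \<longlongrightarrow> 0) at_infinity"
    and margin_regular: "\<exists>C \<epsilon>bar. C > 0 \<and> \<epsilon>bar > 0 \<and>
        (\<forall>\<epsilon>. 0 < \<epsilon> \<and> \<epsilon> < \<epsilon>bar \<longrightarrow>
           (LINT x:{x. \<bar>f0 x - lam\<bar> \<le> \<epsilon>}|lborel. f0 x) \<le> C * \<epsilon>) \<and>
        (\<forall>lam_l lam_h. lam - \<epsilon>bar \<le> lam_l \<and> lam_l < lam_h \<and> lam_h \<le> lam + \<epsilon>bar \<longrightarrow>
           (\<forall>x\<in>level_set f0 lam_h. \<forall>y\<in>level_set f0 lam_h.
              (\<not> connected_component (level_set f0 lam_h) x y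
                 \<longrightarrow> \<not> connected_component (level_set f0 lam_l) x y) \<and>
              (connected_component (level_set f0 lam_l) x y
                 \<longrightarrow> connected_component (level_set f0 lam_h) x y)))"
    and alpha: "0 < \<alpha>" "\<alpha> \<le> 1"
    and holder: "holder_continuous \<alpha> f0"
  shows "\<exists>C0 \<delta>bar \<gamma>bar. C0 > 0 \<and> \<delta>bar > 0 \<and> \<gamma>bar > 0 \<and>
    (\<forall>n::nat. \<forall>a m::real. n \<ge> 16 \<and> 0 < a \<and> a \<le> 1 \<and> 0 < m \<and> m \<le> 1 \<and> a \<le> 2 * m \<longrightarrow>
      holds_with_prob_at_least (sample_space f0 n)
        (\<lambda>X. \<forall>\<delta> \<gamma>. r_rate n lam DIM('d) (measure lborel (ball (0::'d) 1)) \<le> \<delta> \<and> \<delta> < \<delta>bar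
                 \<and> 0 < \<gamma> \<and> \<gamma> < \<gamma>bar \<longrightarrow>
             (\<forall>f. (\<forall>x. \<bar>f x - f0 x\<bar> \<le> \<gamma>) \<longrightarrow>
                binder_D a m n (surrogate_clustering f lam \<delta> X n) (level_clustering f0 lam X n)
                  \<le> C0 * (max \<gamma> (\<delta> powr \<alpha>) + sqrt (ln (real n) / real n))))
        (1 - (1 + real n) / (real n)\<^sup>2))"
proof -
  obtain H0 where H0: "\<And>x y. \<bar>f0 x - f0 y\<bar> \<le> H0 * dist x y powr \<alpha>"
    using holder unfolding holder_continuous_def by blast
  define H where "H = \<bar>H0\<bar> + 1"
  have Hpos: "H > 0" by (simp add: H_def)
  have hold: "\<bar>f0 x - f0 y\<bar> \<le> H * dist x y powr \<alpha>" for x y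
  proof -
    have "H0 * dist x y powr \<alpha> \<le> H * dist x y powr \<alpha>" by (intro mult_right_mono) (auto simp: H_def)
    thus ?thesis using H0[of x y] by linarith
  qed
  obtain C eb where C: "C > 0" and eb: "eb > 0"
    and ii: "\<forall>\<epsilon>. 0 < \<epsilon> \<and> \<epsilon> < eb \<longrightarrow> (LINT x:{x. \<bar>f0 x - lam\<bar> \<le> \<epsilon>}|lborel. f0 x) \<le> C * \<epsilon>"
    and iii: "\<forall>lam_l lam_h. lam - eb \<le> lam_l \<and> lam_l < lam_h \<and> lam_h \<le> lam + eb \<longrightarrow>
           (\<forall>x\<in>level_set f0 lam_h. \<forall>y\<in>level_set f0 lam_h.
              (\<not> connected_component (level_set f0 lam_h) x y
                 \<longrightarrow> \<not> connected_component (level_set f0 lam_l) x y) \<and>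
              (connected_component (level_set f0 lam_l) x y
                 \<longrightarrow> connected_component (level_set f0 lam_h) x y))"
    using margin_regular by blast
  have "eventually (\<lambda>x. dist (f0 x) 0 < lam) at_infinity"
    using tendstoD[OF vanish lam_pos] .
  then obtain b where b: "\<And>x. b \<le> norm x \<Longrightarrow> dist (f0 x) 0 < lam"
    unfolding eventually_at_infinity by blast
  define R where "R = max b 0"
  have R0: "R \<ge> 0" by (simp add: R_def)
  have SR: "level_set f0 lam \<subseteq> cball 0 R"
  proof
    fix x assume "x \<in> level_set f0 lam"
    hence "f0 x \<ge> lam" by (simp add: level_set_def)
    hence "\<not> b \<le> norm x" using b[of x] nonneg[of x] by auto
    thus "x \<in> cball 0 R" by (simp add: R_def)
  qed
  define vd where "vd = unit_ball_vol (real DIM('d))"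
  have vd: "vd > 0" by (simp add: vd_def)
  have vd_eq: "measure lborel (ball (0::'d) 1) = vd"
  proof -
    have "emeasure lborel (ball (0::'d) 1) = ennreal (vd * 1 ^ DIM('d))"
      unfolding vd_def by (rule emeasure_ball) simp
    thus ?thesis using vd by (simp add: measure_def)
  qed
  have d1: "DIM('d) \<ge> 1" by (simp add: DIM_positive)
  define c where "c = min 1 ((lam / (3 * H)) powr (1 / \<alpha>))"
  have c0: "c > 0" using lam_pos Hpos by (simp add: c_def)
  have cprop: "r \<le> 1 \<and> H * r powr \<alpha> \<le> lam / 3" if r: "0 < r" "r \<le> c" for r
  proof
    show "r \<le> 1" using r by (simp add: c_def)
    have "r powr \<alpha> \<le> ((lam / (3 * H)) powr (1 / \<alpha>)) powr \<alpha>"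
      using r alpha by (intro powr_mono2) (auto simp: c_def)
    also have "\<dots> = lam / (3 * H)" using lam_pos Hpos alpha by (simp add: powr_powr)
    finally have "H * r powr \<alpha> \<le> H * (lam / (3 * H))" using Hpos by (intro mult_left_mono) auto
    thus "H * r powr \<alpha> \<le> lam / 3" using Hpos by simp
  qed
  define K where "K = (R + 1) ^ DIM('d) * (16 * real DIM('d)) ^ DIM('d) * lam * vd"
  have ev1: "eventually (\<lambda>n. r_rate n lam DIM('d) vd \<le> c) sequentially"
    by (rule rate_small[OF lam_pos vd d1 c0])
  have ev2: "eventually (\<lambda>n::nat. real n \<ge> K + 1 \<and> n \<ge> 16) sequentially"
  proof -
    have "eventually (\<lambda>n::nat. n \<ge> nat \<lceil>K + 1\<rceil> + 16) sequentially" by (rule eventually_ge_at_top)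
    thus ?thesis
    proof eventually_elim
      case (elim n)
      have "real n \<ge> real (nat \<lceil>K + 1\<rceil>)" using elim by simp
      moreover have "real (nat \<lceil>K + 1\<rceil>) \<ge> K + 1" by linarith
      ultimately show ?case using elim by simp
    qed
  qed
  obtain N0 where N0: "\<And>n. n \<ge> N0 \<Longrightarrow> r_rate n lam DIM('d) vd \<le> c \<and> real n \<ge> K + 1 \<and> n \<ge> 16"
    using eventually_conj[OF ev1 ev2] unfolding eventually_sequentially by blast
  define \<delta>bar where "\<delta>bar = (eb / (4 * H)) powr (1 / \<alpha>)"
  have dbar0: "\<delta>bar > 0" using eb Hpos by (simp add: \<delta>bar_def)
  have dbar: "H * \<delta> powr \<alpha> \<le> eb / 4" if "0 \<le> \<delta>" "\<delta> < \<delta>bar" for \<delta>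
  proof -
    have "\<delta> powr \<alpha> \<le> \<delta>bar powr \<alpha>" using that alpha by (intro powr_mono2) auto
    also have "\<dots> = eb / (4 * H)" using eb Hpos alpha by (simp add: \<delta>bar_def powr_powr)
    finally have "H * \<delta> powr \<alpha> \<le> H * (eb / (4 * H))" using Hpos by (intro mult_left_mono) auto
    thus ?thesis using Hpos by simp
  qed
  define C0 where "C0 = 7 * C * (1 + H) + 7 * (C * eb / 2 + 2) + 7 * sqrt (real N0)"
  have C0pos: "C0 > 0" using C eb Hpos by (simp add: C0_def add_pos_nonneg)
  show ?thesis
  proof (intro exI conjI allI impI)
    show "C0 > 0" "\<delta>bar > 0" by (fact C0pos, fact dbar0)
    show "eb / 4 > 0" using eb by simp
    fix n :: nat and a m :: real
    assume nam: "16 \<le> n \<and> 0 < a \<and> a \<le> 1 \<and> 0 < m \<and> m \<le> 1 \<and> a \<le> 2 * m"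
    have n16: "n \<ge> 16" using nam by simp
    have Msp: "prob_space (sample_space f0 n)" unfolding sample_space_def
      by (rule prob_space_PiM) (rule dens_prob[OF nonneg integrable density])
    have sq0: "sqrt (ln (real n) / real n) \<ge> 0" using n16 by simp
    show "holds_with_prob_at_least (sample_space f0 n)
        (\<lambda>X. \<forall>\<delta> \<gamma>. r_rate n lam DIM('d) (measure lborel (ball (0::'d) 1)) \<le> \<delta> \<and> \<delta> < \<delta>bar
                 \<and> 0 < \<gamma> \<and> \<gamma> < eb / 4 \<longrightarrow>
             (\<forall>f. (\<forall>x. \<bar>f x - f0 x\<bar> \<le> \<gamma>) \<longrightarrow>
                binder_D a m n (surrogate_clustering f lam \<delta> X n) (level_clustering f0 lam X n)
                  \<le> C0 * (max \<gamma> (\<delta> powr \<alpha>) + sqrt (ln (real n) / real n))))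
        (1 - (1 + real n) / (real n)\<^sup>2)"
    proof (cases "n \<ge> N0")
      case True
      note NN = N0[OF True]
      have rpos: "r_rate n lam DIM('d) vd > 0" using rate_facts(1)[OF lam_pos vd d1] n16 by simp
      have cp: "r_rate n lam DIM('d) vd \<le> 1 \<and> H * r_rate n lam DIM('d) vd powr \<alpha> \<le> lam / 3"
        using cprop[OF rpos] NN by simp
      have nK: "real n ^ 5 \<ge> K + 1"
      proof -
        have "real n \<le> real n ^ 5" using n16 by (simp add: self_le_power)
        thus ?thesis using NN by linarith
      qed
      have L: "holds_with_prob_at_least (sample_space f0 n)
        (\<lambda>X. \<forall>\<delta> \<gamma>. r_rate n lam DIM('d) (unit_ball_vol (real DIM('d))) \<le> \<delta> \<and> \<delta> < \<delta>bar
                 \<and> 0 < \<gamma> \<and> \<gamma> < eb / 4 \<longrightarrow>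
             (\<forall>f. (\<forall>x. \<bar>f x - f0 x\<bar> \<le> \<gamma>) \<longrightarrow>
                binder_D a m n (surrogate_clustering f lam \<delta> X n) (level_clustering f0 lam X n)
                  \<le> 7 * C * (1 + H) * max \<gamma> (\<delta> powr \<alpha>) + 7 * (C * eb / 2 + 2) * sqrt (ln (real n) / real n)))
        (1 - (1 + real n) / (real n)\<^sup>2)"
        by (rule large_n[OF nonneg integrable density hold Hpos alpha(1) C eb ii iii SR R0 lam_pos n16 _ _ _ dbar])
           (use cp nK nam in \<open>auto simp: vd_def K_def\<close>)
      show ?thesis
      proof (rule holds_mono[OF L])
        fix X assume _: "X \<in> space (sample_space f0 n)"
        assume P: "\<forall>\<delta> \<gamma>. r_rate n lam DIM('d) (unit_ball_vol (real DIM('d))) \<le> \<delta> \<and> \<delta> < \<delta>bar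
                 \<and> 0 < \<gamma> \<and> \<gamma> < eb / 4 \<longrightarrow>
             (\<forall>f. (\<forall>x. \<bar>f x - f0 x\<bar> \<le> \<gamma>) \<longrightarrow>
                binder_D a m n (surrogate_clustering f lam \<delta> X n) (level_clustering f0 lam X n)
                  \<le> 7 * C * (1 + H) * max \<gamma> (\<delta> powr \<alpha>) + 7 * (C * eb / 2 + 2) * sqrt (ln (real n) / real n))"
        show "\<forall>\<delta> \<gamma>. r_rate n lam DIM('d) (measure lborel (ball (0::'d) 1)) \<le> \<delta> \<and> \<delta> < \<delta>bar
                 \<and> 0 < \<gamma> \<and> \<gamma> < eb / 4 \<longrightarrow>
             (\<forall>f. (\<forall>x. \<bar>f x - f0 x\<bar> \<le> \<gamma>) \<longrightarrow>
                binder_D a m n (surrogate_clustering f lam \<delta> X n) (level_clustering f0 lam X n)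
                  \<le> C0 * (max \<gamma> (\<delta> powr \<alpha>) + sqrt (ln (real n) / real n)))"
        proof (intro allI impI)
          fix \<delta> \<gamma> f
          assume cond: "r_rate n lam DIM('d) (measure lborel (ball (0::'d) 1)) \<le> \<delta> \<and> \<delta> < \<delta>bar \<and> 0 < \<gamma> \<and> \<gamma> < eb / 4"
            and fg: "\<forall>x. \<bar>f x - f0 x\<bar> \<le> \<gamma>"
          have "binder_D a m n (surrogate_clustering f lam \<delta> X n) (level_clustering f0 lam X n)
                  \<le> 7 * C * (1 + H) * max \<gamma> (\<delta> powr \<alpha>) + 7 * (C * eb / 2 + 2) * sqrt (ln (real n) / real n)"
            using P cond fg by (simp add: vd_eq vd_def)
          also have "\<dots> \<le> C0 * max \<gamma> (\<delta> powr \<alpha>) + C0 * sqrt (ln (real n) / real n)"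
          proof (rule add_mono)
            have m0: "max \<gamma> (\<delta> powr \<alpha>) \<ge> 0" using cond by (auto simp: le_max_iff_disj)
            show "7 * C * (1 + H) * max \<gamma> (\<delta> powr \<alpha>) \<le> C0 * max \<gamma> (\<delta> powr \<alpha>)"
              using m0 C eb by (intro mult_right_mono) (auto simp: C0_def)
            show "7 * (C * eb / 2 + 2) * sqrt (ln (real n) / real n) \<le> C0 * sqrt (ln (real n) / real n)"
              using sq0 C eb Hpos by (intro mult_right_mono) (auto simp: C0_def)
          qed
          also have "\<dots> = C0 * (max \<gamma> (\<delta> powr \<alpha>) + sqrt (ln (real n) / real n))" by (simp add: algebra_simps)
          finally show "binder_D a m n (surrogate_clustering f lam \<delta> X n) (level_clustering f0 lam X n)
                  \<le> C0 * (max \<gamma> (\<delta> powr \<alpha>) + sqrt (ln (real n) / real n))" .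
        qed
      qed
    next
      case False
      have lnn: "ln (real n) \<ge> 1"
      proof -
        have "exp 1 \<le> (3::real)" using exp_le by simp
        also have "\<dots> \<le> real n" using n16 by simp
        finally show ?thesis using n16 by (simp add: ln_ge_iff)
      qed
      have seven: "7 \<le> C0 * sqrt (ln (real n) / real n)"
      proof -
        have "1 \<le> real N0 * ln (real n) / real n"
        proof -
          have "real n \<le> real N0" using False by simp
          also have "\<dots> \<le> real N0 * ln (real n)" using lnn by (simp add: mult_le_cancel_left1)
          finally show ?thesis using n16 by (simp add: field_simps)
        qed
        hence "1 \<le> sqrt (real N0 * ln (real n) / real n)" by simp
        also have "\<dots> = sqrt (real N0) * sqrt (ln (real n) / real n)" by (simp add: real_sqrt_mult[symmetric])
        finally have "7 \<le> 7 * sqrt (real N0) * sqrt (ln (real n) / real n)" by simp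
        also have "\<dots> \<le> C0 * sqrt (ln (real n) / real n)"
          using sq0 C eb Hpos by (intro mult_right_mono) (auto simp: C0_def)
        finally show ?thesis .
      qed
      show ?thesis
      proof (rule holds_trivial[OF Msp])
        show "1 - (1 + real n) / (real n)\<^sup>2 \<le> 1" by simp
        fix X
        show "\<forall>\<delta> \<gamma>. r_rate n lam DIM('d) (measure lborel (ball (0::'d) 1)) \<le> \<delta> \<and> \<delta> < \<delta>bar
                 \<and> 0 < \<gamma> \<and> \<gamma> < eb / 4 \<longrightarrow>
             (\<forall>f. (\<forall>x. \<bar>f x - f0 x\<bar> \<le> \<gamma>) \<longrightarrow>
                binder_D a m n (surrogate_clustering f lam \<delta> X n) (level_clustering f0 lam X n)
                  \<le> C0 * (max \<gamma> (\<delta> powr \<alpha>) + sqrt (ln (real n) / real n)))"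
        proof (intro allI impI)
          fix \<delta> \<gamma> f
          assume cond: "r_rate n lam DIM('d) (measure lborel (ball (0::'d) 1)) \<le> \<delta> \<and> \<delta> < \<delta>bar \<and> 0 < \<gamma> \<and> \<gamma> < eb / 4"
          have mx: "0 \<le> max \<gamma> (\<delta> powr \<alpha>)" using cond by (auto simp: le_max_iff_disj)
          have "binder_D a m n (surrogate_clustering f lam \<delta> X n) (level_clustering f0 lam X n) \<le> 7"
            by (rule D_trivial) (use nam in auto)
          also have "\<dots> \<le> C0 * sqrt (ln (real n) / real n)" by (rule seven)
          also have "C0 * sqrt (ln (real n) / real n) \<le> C0 * (max \<gamma> (\<delta> powr \<alpha>) + sqrt (ln (real n) / real n))"
            using C0pos mx by (intro mult_left_mono) auto
          finally show "binder_D a m n (surrogate_clustering f lam \<delta> X n) (level_clustering f0 lam X n)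
                  \<le> C0 * (max \<gamma> (\<delta> powr \<alpha>) + sqrt (ln (real n) / real n))" .
        qed
      qed
    qed
  qed
qed


end
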